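(* Let $k\in\mathbb N$, let $\pi$ be a partition of $\{1,\dots,k\}$, and let $\mathcal I^*(\pi)$ be the set of graphs consistent with $\pi$ having exactly $k-\#\pi+1$ connected components, where $\#\pi$ is the number of blocks of $\pi$. (i) If $\pi$ is crossing, then $\mathcal I^*(\pi)=\emptyset$. (ii) If $\pi$ is non-crossing, then $\mathcal I^*(\pi)$ consists of exactly one graph $G$, and $\pi=K(\eta)$, where $\eta$ is the partition of $\{1,\dots,k\}$ whose blocks are the vertex sets of the connected components of $G$ and $K$ denotes the Kreweras complement.
   Context: Let $\pi$ be a partition of $\{1,\dots,k\}$ with blocks $B^{(1)},\dots,B^{(q)}$; indices are taken cyclically, i.e. $0$ is identified with $k$ and $k+1$ with $1$. The closed blocks are $\overline B^{(s)}=B^{(s)}\cup\{l\in\{1,\dots,k\}: l-1\in B^{(s)}\}$. The multiplicity $m_\pi(l)$ of $l\in\{1,\dots,k\}$ is $2$ if $l$ and $l-1$ lie in the same block of $\pi$, and $1$ otherwise. A graph consistent with $\pi$ is an undirected multigraph $G$ (loops allowed, a loop contributing $2$ to the degree) with vertex set $\{1,\dots,k\}$ and $k$ edges, whose edge set can be written as a disjoint union $E^{(1)}\cup\dots\cup E^{(q)}$ such that for each $s$, all edges of $E^{(s)}$ have both ends in $\overline B^{(s)}$ and, in the subgraph with vertex set $\overline B^{(s)}$ and edge set $E^{(s)}$, every vertex $l$ has degree $m_\pi(l)$. A partition is crossing if there exist $i<j<i'<j'$ with $i,i'$ in one block and $j,j'$ in a different block; otherwise it is non-crossing. For a non-crossing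 partition $\eta$ of $\{1,\dots,k\}$, its Kreweras complement $K(\eta)$ is the largest (with respect to refinement) partition $\sigma$ of $\{1,\dots,k\}$ such that the partition of the interlaced ordered set $1<\bar1<2<\bar2<\dots<k<\bar k$ whose blocks are the blocks of $\eta$ (on the unbarred elements) together with the blocks of $\sigma$ (placed on the barred elements) is non-crossing. *)

theory Defs
  imports Main "HOL-Library.Multiset" "HOL-Library.Disjoint_Sets"
begin

text \<open>Cyclic predecessor on {1..k}: 0 is identified with k.\<close>
definition cprev :: "nat \<Rightarrow> nat \<Rightarrow> nat" where
  "cprev k l = (if l = 1 then k else l - 1)"

definition closed_block :: "nat \<Rightarrow> nat set \<Rightarrow> nat set" where
  "closed_block k B = B \<union> {l \<in> {1..k}. cprev k l \<in> B}"

definition mult_pi :: "nat \<Rightarrow> nat set set \<Rightarrow> nat \<Rightarrow> nat" where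
  "mult_pi k P l = (if \<exists>B\<in>P. l \<in> B \<and> cprev k l \<in> B then 2 else 1)"

text \<open>Undirected multigraphs on {1..k}: a multiset of edges; an edge is the set
  of its endpoints, {a} for a loop at a.\<close>
definition is_mgraph :: "nat \<Rightarrow> nat set multiset \<Rightarrow> bool" where
  "is_mgraph k G \<longleftrightarrow> (\<forall>e\<in>#G. e \<subseteq> {1..k} \<and> (card e = 1 \<or> card e = 2))"

definition mdeg :: "nat set multiset \<Rightarrow> nat \<Rightarrow> nat" where
  "mdeg E l = (\<Sum>e\<in>#E. if e = {l} then 2 else if l \<in> e then 1 else 0)"

definition consistent :: "nat \<Rightarrow> nat set set \<Rightarrow> nat set multiset \<Rightarrow> bool" where
  "consistent k P G \<longleftrightarrow> is_mgraph k G \<and> size G = k \<and>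
     (\<exists>E :: nat set \<Rightarrow> nat set multiset.
        G = (\<Sum>B\<in>P. E B) \<and>
        (\<forall>B\<in>P. (\<forall>e\<in>#E B. e \<subseteq> closed_block k B) \<and>
                (\<forall>l\<in>closed_block k B. mdeg (E B) l = mult_pi k P l)))"

definition madj :: "nat set multiset \<Rightarrow> (nat \<times> nat) set" where
  "madj G = {(u, v). \<exists>e\<in>#G. u \<in> e \<and> v \<in> e}"

definition components :: "nat \<Rightarrow> nat set multiset \<Rightarrow> nat set set" where
  "components k G = {1..k} // ((madj G)\<^sup>*)"

definition crossing :: "nat set set \<Rightarrow> bool" where
  "crossing P \<longleftrightarrow> (\<exists>B\<in>P. \<exists>B'\<in>P. B \<noteq> B' \<and>
     (\<exists>i j i' j'. i < j \<and> j < i' \<and> i' < j' \<and> i \<in> B \<and> i' \<in> B \<and> j \<in> B' \<and> j' \<in> B'))"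

definition refines :: "nat set set \<Rightarrow> nat set set \<Rightarrow> bool" where
  "refines S T \<longleftrightarrow> (\<forall>B\<in>S. \<exists>C\<in>T. B \<subseteq> C)"

text \<open>Interlacing 1 < 1bar < 2 < 2bar < ... < k < kbar, encoded as i \<mapsto> 2i-1, ibar \<mapsto> 2i.\<close>
definition interlace :: "nat set set \<Rightarrow> nat set set \<Rightarrow> nat set set" where
  "interlace N S = ((\<lambda>B. (\<lambda>i. 2 * i - 1) ` B) ` N) \<union> ((\<lambda>B. (\<lambda>i. 2 * i) ` B) ` S)"

definition kreweras_admissible :: "nat \<Rightarrow> nat set set \<Rightarrow> nat set set \<Rightarrow> bool" where
  "kreweras_admissible k N S \<longleftrightarrow> partition_on {1..k} S \<and> \<not> crossing (interlace N S)"

definition kreweras :: "nat \<Rightarrow> nat set set \<Rightarrow> nat set set" where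
  "kreweras k N = (THE S. kreweras_admissible k N S \<and>
       (\<forall>T. kreweras_admissible k N T \<longrightarrow> refines T S))"

definition Istar :: "nat \<Rightarrow> nat set set \<Rightarrow> nat set multiset set" where
  "Istar k P = {G. consistent k P G \<and> card (components k G) = k - card P + 1}"

end

theory Submission
  imports Defs
begin


definition nxt :: "nat set \<Rightarrow> nat \<Rightarrow> nat" where
  "nxt X b = (if \<exists>c\<in>X. b < c then Min {c\<in>X. b < c} else Min X)"
definition prv :: "nat set \<Rightarrow> nat \<Rightarrow> nat" where
  "prv X b = (if \<exists>c\<in>X. c < b then Max {c\<in>X. c < b} else Max X)"

lemma nxt_char:
  assumes "finite X" "X \<noteq> {}"
  shows "nxt X b \<in> X \<and> (if \<exists>c\<in>X. b<c then b < nxt X b \<and> (\<forall>d\<in>X. b<d \<longrightarrow> nxt X b \<le> d)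
          else (\<forall>d\<in>X. nxt X b \<le> d))"
proof (cases "\<exists>c\<in>X. b<c")
  case True
  then have ne: "{c\<in>X. b < c} \<noteq> {}" by auto
  have f: "finite {c\<in>X. b < c}" using assms by auto
  have "Min {c\<in>X. b < c} \<in> {c\<in>X. b < c}" using Min_in[OF f ne] .
  then show ?thesis using True Min_le[OF f] unfolding nxt_def by auto
next
  case False
  then show ?thesis using assms Min_in Min_le unfolding nxt_def by auto
qed

lemma prv_char:
  assumes "finite X" "X \<noteq> {}"
  shows "prv X b \<in> X \<and> (if \<exists>c\<in>X. c<b then prv X b < b \<and> (\<forall>d\<in>X. d<b \<longrightarrow> d \<le> prv X b)
          else (\<forall>d\<in>X. d \<le> prv X b))"
proof (cases "\<exists>c\<in>X. c<b")
  case True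
  then have ne: "{c\<in>X. c < b} \<noteq> {}" by auto
  have f: "finite {c\<in>X. c < b}" using assms by auto
  have "Max {c\<in>X. c < b} \<in> {c\<in>X. c < b}" using Max_in[OF f ne] .
  then show ?thesis using True Max_ge[OF f] unfolding prv_def by auto
next
  case False
  then show ?thesis using assms Max_in Max_ge unfolding prv_def by auto
qed

lemma nxt_unique:
  assumes "finite X" "c \<in> X"
    "(b < c \<and> (\<forall>d\<in>X. b<d \<longrightarrow> c \<le> d)) \<or> ((\<forall>d\<in>X. d \<le> b) \<and> (\<forall>d\<in>X. c \<le> d))"
  shows "nxt X b = c"
proof -
  have ne: "X \<noteq> {}" using assms by auto
  note h = nxt_char[OF assms(1) ne, of b]
  show ?thesis using assms(2,3) h
    by (smt (verit, ccfv_SIG) le_antisym linorder_not_le)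
qed

lemma prv_unique:
  assumes "finite X" "c \<in> X"
    "(c < b \<and> (\<forall>d\<in>X. d<b \<longrightarrow> d \<le> c)) \<or> ((\<forall>d\<in>X. b \<le> d) \<and> (\<forall>d\<in>X. d \<le> c))"
  shows "prv X b = c"
proof -
  have ne: "X \<noteq> {}" using assms by auto
  note h = prv_char[OF assms(1) ne, of b]
  show ?thesis using assms(2,3) h
    by (smt (verit, ccfv_SIG) le_antisym linorder_not_le)
qed

lemma nxt_in: "finite X \<Longrightarrow> X \<noteq> {} \<Longrightarrow> nxt X b \<in> X"
  using nxt_char by blast
lemma prv_in: "finite X \<Longrightarrow> X \<noteq> {} \<Longrightarrow> prv X b \<in> X"
  using prv_char by blast

lemma nxt_prv: assumes "finite X" "b \<in> X" shows "nxt X (prv X b) = b"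
proof -
  have ne: "X \<noteq> {}" using assms by auto
  note p = prv_char[OF assms(1) ne, of b]
  show ?thesis
  proof (rule nxt_unique[OF assms(1,2)])
    show "(prv X b < b \<and> (\<forall>d\<in>X. prv X b < d \<longrightarrow> b \<le> d)) \<or> ((\<forall>d\<in>X. d \<le> prv X b) \<and> (\<forall>d\<in>X. b \<le> d))"
    proof (cases "\<exists>c\<in>X. c<b")
      case True
      then have "prv X b < b" "\<forall>d\<in>X. d<b \<longrightarrow> d \<le> prv X b" using p by auto
      then show ?thesis by (meson leI leD)
    next
      case False
      then have "\<forall>d\<in>X. d \<le> prv X b" using p by auto
      then show ?thesis using False by (simp add: not_less)
    qed
  qed
qed

lemma prv_nxt: assumes "finite X" "b \<in> X" shows "prv X (nxt X b) = b"
proof -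
  have ne: "X \<noteq> {}" using assms by auto
  note p = nxt_char[OF assms(1) ne, of b]
  show ?thesis
  proof (rule prv_unique[OF assms(1,2)])
    show "(b < nxt X b \<and> (\<forall>d\<in>X. d < nxt X b \<longrightarrow> d \<le> b)) \<or> ((\<forall>d\<in>X. nxt X b \<le> d) \<and> (\<forall>d\<in>X. d \<le> b))"
    proof (cases "\<exists>c\<in>X. b<c")
      case True
      then have "b < nxt X b" "\<forall>d\<in>X. b<d \<longrightarrow> nxt X b \<le> d" using p by auto
      then show ?thesis by (meson leI leD)
    next
      case False
      then have "\<forall>d\<in>X. nxt X b \<le> d" using p by auto
      then show ?thesis using False by (simp add: not_less)
    qed
  qed
qed

lemma nxt_inj: "finite X \<Longrightarrow> a \<in> X \<Longrightarrow> b \<in> X \<Longrightarrow> nxt X a = nxt X b \<Longrightarrow> a = b"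
  by (metis prv_nxt)
lemma prv_inj: "finite X \<Longrightarrow> a \<in> X \<Longrightarrow> b \<in> X \<Longrightarrow> prv X a = prv X b \<Longrightarrow> a = b"
  by (metis nxt_prv)

lemma nxt_eq_iff: "finite X \<Longrightarrow> a \<in> X \<Longrightarrow> c \<in> X \<Longrightarrow> nxt X a = c \<longleftrightarrow> a = prv X c"
  by (metis nxt_prv prv_nxt)

lemma nxt_single: "nxt {b} a = b" by (rule nxt_unique) auto
lemma prv_single: "prv {b} a = b" by (rule prv_unique) auto

lemma nxt_neq:
  assumes "finite X" "b \<in> X" "card X \<ge> 2" shows "nxt X b \<noteq> b"
proof
  assume e: "nxt X b = b"
  have ne: "X \<noteq> {}" using assms by auto
  note p = nxt_char[OF assms(1) ne, of b]
  obtain c where c: "c \<in> X" "c \<noteq> b"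
    using assms by (metis card_le_Suc0_iff_eq not_less_eq_eq numeral_2_eq_2)
  show False using p e c by (auto split: if_splits) (meson le_antisym linorder_not_le)+
qed

lemma prv_neq:
  assumes "finite X" "b \<in> X" "card X \<ge> 2" shows "prv X b \<noteq> b"
  by (metis assms nxt_neq nxt_prv)

lemma nxt_subset:
  assumes "finite Y" "X \<subseteq> Y" "nxt Y b \<in> X"
  shows "nxt X b = nxt Y b"
proof -
  have fX: "finite X" using assms finite_subset by blast
  have ne: "Y \<noteq> {}" using assms by auto
  note p = nxt_char[OF assms(1) ne, of b]
  show ?thesis
  proof (rule nxt_unique[OF fX assms(3)], cases "\<exists>c\<in>Y. b<c")
    case True
    then show "b < nxt Y b \<and> (\<forall>d\<in>X. b < d \<longrightarrow> nxt Y b \<le> d) \<or> (\<forall>d\<in>X. d \<le> b) \<and> (\<forall>d\<in>X. nxt Y b \<le> d)"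
      using p assms(2) by auto
  next
    case False
    then show "b < nxt Y b \<and> (\<forall>d\<in>X. b < d \<longrightarrow> nxt Y b \<le> d) \<or> (\<forall>d\<in>X. d \<le> b) \<and> (\<forall>d\<in>X. nxt Y b \<le> d)"
      using p assms(2) by (auto simp: not_less)
  qed
qed

lemma prv_subset:
  assumes "finite Y" "X \<subseteq> Y" "prv Y b \<in> X"
  shows "prv X b = prv Y b"
proof -
  have fX: "finite X" using assms finite_subset by blast
  have ne: "Y \<noteq> {}" using assms by auto
  note p = prv_char[OF assms(1) ne, of b]
  show ?thesis
  proof (rule prv_unique[OF fX assms(3)], cases "\<exists>c\<in>Y. c<b")
    case True
    then show "prv Y b < b \<and> (\<forall>d\<in>X. d < b \<longrightarrow> d \<le> prv Y b) \<or> (\<forall>d\<in>X. b \<le> d) \<and> (\<forall>d\<in>X. d \<le> prv Y b)"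
      using p assms(2) by auto
  next
    case False
    then show "prv Y b < b \<and> (\<forall>d\<in>X. d < b \<longrightarrow> d \<le> prv Y b) \<or> (\<forall>d\<in>X. b \<le> d) \<and> (\<forall>d\<in>X. d \<le> prv Y b)"
      using p assms(2) by (auto simp: not_less)
  qed
qed

lemma nxt_remove:
  assumes "finite X" "l \<in> X" "b \<in> X" "b \<noteq> l" "card X \<ge> 2"
  shows "nxt (X - {l}) b = (if nxt X b = l then nxt X l else nxt X b)"
proof -
  have ne: "X \<noteq> {}" using assms by auto
  have f': "finite (X - {l})" using assms by auto
  have ne': "X - {l} \<noteq> {}" using assms by auto
  note p = nxt_char[OF assms(1) ne, of b]
  note q = nxt_char[OF assms(1) ne, of l]
  show ?thesis
  proof (cases "nxt X b = l")
    case False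
    then show ?thesis using nxt_subset[OF assms(1), of "X - {l}" b] p by auto
  next
    case True
    have ql: "nxt X l \<noteq> l" using nxt_neq assms by blast
    have "nxt (X - {l}) b = nxt X l"
      apply (rule nxt_unique[OF f'])
      using p q True ql assms(3,4) by (auto split: if_splits) (smt (verit) leD le_antisym less_imp_le_nat not_le)+
    then show ?thesis using True by simp
  qed
qed

lemma prv_remove:
  assumes "finite X" "l \<in> X" "b \<in> X" "b \<noteq> l" "card X \<ge> 2"
  shows "prv (X - {l}) b = (if prv X b = l then prv X l else prv X b)"
proof -
  have ne: "X \<noteq> {}" using assms by auto
  have f': "finite (X - {l})" using assms by auto
  note p = prv_char[OF assms(1) ne, of b]
  note q = prv_char[OF assms(1) ne, of l]
  show ?thesis
  proof (cases "prv X b = l")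
    case False
    then show ?thesis using prv_subset[OF assms(1), of "X - {l}" b] p by auto
  next
    case True
    have ql: "prv X l \<noteq> l" using prv_neq assms by blast
    have "prv (X - {l}) b = prv X l"
      apply (rule prv_unique[OF f'])
      using p q True ql assms(3,4) by (auto split: if_splits) (smt (verit) leD le_antisym less_imp_le_nat not_le)+
    then show ?thesis using True by simp
  qed
qed

lemma prv_interval:
  assumes "v \<in> {1..k}" shows "prv {1..k} v = cprev k v"
proof (rule prv_unique)
  show "cprev k v \<in> {1..k}" using assms by (auto simp: cprev_def)
  show "(cprev k v < v \<and> (\<forall>d\<in>{1..k}. d < v \<longrightarrow> d \<le> cprev k v)) \<or>
    ((\<forall>d\<in>{1..k}. v \<le> d) \<and> (\<forall>d\<in>{1..k}. d \<le> cprev k v))"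
    using assms by (auto simp: cprev_def)
qed simp


lemma mdeg_add[simp]: "mdeg (A + B) v = mdeg A v + mdeg B v"
  by (simp add: mdeg_def)
lemma mdeg_empty[simp]: "mdeg {#} v = 0"
  by (simp add: mdeg_def)
lemma mdeg_single: "mdeg {#e#} v = (if e = {v} then 2 else if v \<in> e then 1 else 0)"
  by (simp add: mdeg_def)
lemma mdeg_pair: "mdeg {#{a,b}#} v = (if a = v then 1 else 0) + (if b = v then 1 else 0)"
  by (auto simp: mdeg_single)
lemma mdeg_add_mset: "mdeg (add_mset e A) v = (if e = {v} then 2 else if v \<in> e then 1 else 0) + mdeg A v"
  by (simp add: mdeg_def)

lemma mdeg_ge1: "e \<in># E \<Longrightarrow> v \<in> e \<Longrightarrow> mdeg E v \<ge> 1"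
proof -
  assume "e \<in># E" "v \<in> e"
  then obtain F where "E = add_mset e F" by (metis multi_member_split)
  then show ?thesis using \<open>v \<in> e\<close> by (simp add: mdeg_add_mset mdeg_single)
qed

lemma mdeg_ge2: "{v} \<in># E \<Longrightarrow> mdeg E v \<ge> 2"
proof -
  assume "{v} \<in># E"
  then obtain F where "E = add_mset {v} F" by (metis multi_member_split)
  then show ?thesis by (simp add: mdeg_add_mset mdeg_single)
qed

lemma mdeg_zero: "mdeg E v = 0 \<Longrightarrow> e \<in># E \<Longrightarrow> v \<notin> e"
  using mdeg_ge1 by fastforce

lemma mdeg_minus: "e \<in># E \<Longrightarrow> mdeg (E - {#e#}) v = mdeg E v - mdeg {#e#} v"
  by (metis add_diff_cancel_right' insert_DiffM2 mdeg_add)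

lemma mdeg_sum: "finite P \<Longrightarrow> mdeg (\<Sum>B\<in>P. E B) v = (\<Sum>B\<in>P. mdeg (E B) v)"
  by (induction P rule: finite_induct) auto

lemma deg_sum:
  assumes "\<forall>e\<in>#E. e \<subseteq> S \<and> (card e = 1 \<or> card e = 2)" "finite S"
  shows "(\<Sum>v\<in>S. mdeg E v) = 2 * size E"
  using assms(1)
proof (induction E)
  case empty then show ?case by simp
next
  case (add e E)
  have IH: "(\<Sum>v\<in>S. mdeg E v) = 2 * size E" using add by auto
  have e: "e \<subseteq> S" "card e = 1 \<or> card e = 2" using add by auto
  have "(\<Sum>v\<in>S. mdeg {#e#} v) = 2"
  proof (cases "card e = 1")
    case True
    then obtain a where a: "e = {a}" by (auto simp: card_Suc_eq)
    then have "a \<in> S" using e by auto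
    then have "(\<Sum>v\<in>S. mdeg {#e#} v) = (\<Sum>v\<in>S. if v = a then 2 else 0)"
      by (intro sum.cong) (auto simp: a mdeg_single)
    also have "\<dots> = 2" using \<open>a \<in> S\<close> assms(2) by simp
    finally show ?thesis .
  next
    case False
    then have "card e = 2" using e by auto
    then obtain a b where ab: "e = {a,b}" "a \<noteq> b" by (auto simp: card_Suc_eq numeral_2_eq_2)
    then have abS: "a \<in> S" "b \<in> S" using e by auto
    have "(\<Sum>v\<in>S. mdeg {#e#} v) = (\<Sum>v\<in>S. (if a = v then 1 else 0) + (if b = v then 1 else 0))"
      by (intro sum.cong) (auto simp: ab mdeg_pair)
    also have "\<dots> = 2" using abS assms(2) by (simp add: sum.distrib)
    finally show ?thesis .
  qed
  moreover have "mdeg (add_mset e E) v = mdeg {#e#} v + mdeg E v" for v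
    by (simp add: mdeg_add_mset mdeg_single)
  ultimately show ?case using IH by (simp add: sum.distrib)
qed

section \<open>Components\<close>

definition comps :: "nat set \<Rightarrow> nat set multiset \<Rightarrow> nat set set" where
  "comps S G = S // ((madj G)\<^sup>*)"

lemma madj_sym: "sym (madj G)"
  by (auto simp: madj_def sym_def)

lemma rtrancl_sym_class_eq:
  assumes "sym R" shows "(R\<^sup>*``{u} = R\<^sup>*``{v}) \<longleftrightarrow> (u,v) \<in> R\<^sup>*"
proof -
  have s: "sym (R\<^sup>*)" using assms sym_rtrancl by blast
  show ?thesis
  proof
    assume "R\<^sup>*``{u} = R\<^sup>*``{v}"
    then have "v \<in> R\<^sup>*``{u}" by auto
    then show "(u,v) \<in> R\<^sup>*" by auto
  next
    assume uv: "(u,v) \<in> R\<^sup>*"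
    have vu: "(v,u) \<in> R\<^sup>*" using s uv by (meson symD)
    show "R\<^sup>*``{u} = R\<^sup>*``{v}"
      using uv vu by (auto intro: rtrancl_trans)
  qed
qed

lemma quotient_image: "S // R = (\<lambda>x. R``{x}) ` S"
  by (auto simp: quotient_def)

lemma card_image_kernel_le:
  assumes "\<forall>u\<in>S. \<forall>v\<in>S. (f u = f v) \<longleftrightarrow> (g u = g v)" "finite S"
  shows "card (g ` S) \<le> card (f ` S)"
proof -
  define h where "h X = g (SOME u. u \<in> S \<and> f u = X)" for X
  have "g ` S = h ` (f ` S)"
  proof (intro set_eqI iffI)
    fix y assume "y \<in> g ` S"
    then obtain u where u: "u \<in> S" "y = g u" by auto
    have "\<exists>w. w \<in> S \<and> f w = f u" using u by auto
    then have "(SOME w. w \<in> S \<and> f w = f u) \<in> S \<and> f (SOME w. w \<in> S \<and> f w = f u) = f u"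
      by (rule someI_ex)
    then have "h (f u) = g u" using assms(1) u unfolding h_def by metis
    then show "y \<in> h ` (f ` S)" using u by (metis imageI)
  next
    fix y assume "y \<in> h ` (f ` S)"
    then obtain u where u: "u \<in> S" "y = h (f u)" by auto
    have "\<exists>w. w \<in> S \<and> f w = f u" using u by auto
    then have "(SOME w. w \<in> S \<and> f w = f u) \<in> S \<and> f (SOME w. w \<in> S \<and> f w = f u) = f u"
      by (rule someI_ex)
    then show "y \<in> g ` S" using u unfolding h_def by auto
  qed
  then show ?thesis using card_image_le assms(2) by (metis finite_imageI)
qed

lemma card_image_kernel:
  assumes "\<forall>u\<in>S. \<forall>v\<in>S. (f u = f v) \<longleftrightarrow> (g u = g v)" "finite S"
  shows "card (f ` S) = card (g ` S)"
proof -
  have "\<forall>u\<in>S. \<forall>v\<in>S. (g u = g v) \<longleftrightarrow> (f u = f v)" using assms(1) by auto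
  then show ?thesis using card_image_kernel_le[OF assms] card_image_kernel_le[of S g f] assms(2)
    by (meson dual_order.antisym)
qed

lemma rtrancl_mono_rel:
  assumes "\<And>a b. (a,b) \<in> R \<Longrightarrow> (a,b) \<in> Q\<^sup>*" "(u,v) \<in> R\<^sup>*"
  shows "(u,v) \<in> Q\<^sup>*"
  using assms(2) by (induction rule: rtrancl_induct) (auto intro: rtrancl_trans assms(1))

lemma rtrancl_map_rel:
  assumes "\<And>a b. (a,b) \<in> R \<Longrightarrow> (f a, f b) \<in> Q\<^sup>*" "(u,v) \<in> R\<^sup>*"
  shows "(f u, f v) \<in> Q\<^sup>*"
  using assms(2) by (induction rule: rtrancl_induct) (auto intro: rtrancl_trans assms(1))

lemma comps_contract:
  assumes S: "finite S" "l \<in> S" "x \<in> S" "y \<in> S" "x \<noteq> l" "y \<noteq> l"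
    and H: "\<forall>e\<in>#H. l \<notin> e"
  shows "card (comps S (H + {#{l,x},{l,y}#})) = card (comps (S - {l}) (H + {#{x,y}#}))"
proof -
  define G where "G = H + {#{l,x},{l,y}#}"
  define G' where "G' = H + {#{x,y}#}"
  define f where "f v = (if v = l then x else v)" for v
  have m1: "(f a, f b) \<in> (madj G')\<^sup>*" if ab: "(a,b) \<in> madj G" for a b
  proof -
    obtain e where e: "e \<in># G" "a \<in> e" "b \<in> e" using ab unfolding madj_def by blast
    show ?thesis
    proof (cases "e \<in># H")
      case True
      then have "a \<noteq> l" "b \<noteq> l" using H e by auto
      then show ?thesis using True e by (auto simp: madj_def G'_def f_def)
    next
      case False
      then have "e = {l,x} \<or> e = {l,y}" using e by (auto simp: G_def)
      moreover have "(x,y) \<in> madj G'" "(y,x) \<in> madj G'" "(x,x) \<in> madj G'" "(y,y) \<in> madj G'"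
        by (auto simp: madj_def G'_def)
      ultimately show ?thesis using e by (auto simp: f_def)
    qed
  qed
  have m2: "(a,b) \<in> (madj G)\<^sup>*" if ab: "(a,b) \<in> madj G'" for a b
  proof -
    obtain e where e: "e \<in># G'" "a \<in> e" "b \<in> e" using ab unfolding madj_def by blast
    show ?thesis
    proof (cases "e \<in># H")
      case True
      then show ?thesis using e by (auto simp: madj_def G_def)
    next
      case False
      then have exy: "e = {x,y}" using e by (auto simp: G'_def)
      have "(x,l) \<in> madj G" "(l,y) \<in> madj G" "(y,l) \<in> madj G" "(l,x) \<in> madj G"
        by (auto simp: madj_def G_def)
      then have "(x,y) \<in> (madj G)\<^sup>*" "(y,x) \<in> (madj G)\<^sup>*" by (meson rtrancl.simps)+
      then show ?thesis using e exy by auto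
    qed
  qed
  have uf: "(u, f u) \<in> (madj G)\<^sup>*" for u
  proof -
    have "(l,x) \<in> madj G" by (auto simp: madj_def G_def)
    then show ?thesis by (auto simp: f_def)
  qed
  have key: "(u,v) \<in> (madj G)\<^sup>* \<longleftrightarrow> (f u, f v) \<in> (madj G')\<^sup>*" for u v
  proof
    assume "(u,v) \<in> (madj G)\<^sup>*"
    then show "(f u, f v) \<in> (madj G')\<^sup>*" using rtrancl_map_rel[of "madj G" f "madj G'"] m1 by blast
  next
    assume "(f u, f v) \<in> (madj G')\<^sup>*"
    then have a: "(f u, f v) \<in> (madj G)\<^sup>*" using rtrancl_mono_rel[of "madj G'" "madj G"] m2 by blast
    have s: "sym ((madj G)\<^sup>*)" using madj_sym sym_rtrancl by blast
    have "(f v, v) \<in> (madj G)\<^sup>*" using uf s by (meson symD)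
    then show "(u,v) \<in> (madj G)\<^sup>*" using uf[of u] a by (meson rtrancl_trans)
  qed
  have fS: "f ` S = S - {l}" using S by (auto simp: f_def)
  have "card (comps S G) = card ((\<lambda>u. (madj G)\<^sup>*``{u}) ` S)"
    by (simp add: comps_def quotient_image)
  also have "\<dots> = card ((\<lambda>u. (madj G')\<^sup>*``{f u}) ` S)"
    by (rule card_image_kernel[OF _ S(1)])
       (simp add: rtrancl_sym_class_eq[OF madj_sym] key)
  also have "(\<lambda>u. (madj G')\<^sup>*``{f u}) ` S = (\<lambda>w. (madj G')\<^sup>*``{w}) ` (f ` S)" by auto
  also have "card \<dots> = card (comps (S - {l}) G')"
    by (simp add: comps_def quotient_image fS)
  finally show ?thesis by (simp add: G_def G'_def)
qed

lemma comps_loop: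
  assumes S: "finite S" "l \<in> S" and H: "\<forall>e\<in>#H. l \<notin> e"
  shows "card (comps S (H + {#{l}#})) = card (comps (S - {l}) H) + 1"
proof -
  define G where "G = H + {#{l}#}"
  have m: "madj G = madj H \<union> {(l,l)}"
    by (auto simp: madj_def G_def)
  have rt: "(madj G)\<^sup>* = (madj H)\<^sup>*"
  proof -
    have "(madj H \<union> {(l,l)})\<^sup>* = (madj H)\<^sup>*"
    proof (intro subset_antisym subsetI)
      fix p assume "p \<in> (madj H \<union> {(l,l)})\<^sup>*"
      then show "p \<in> (madj H)\<^sup>*"
        using rtrancl_mono_rel[of "madj H \<union> {(l,l)}" "madj H" "fst p" "snd p"] by auto
    next
      fix p assume "p \<in> (madj H)\<^sup>*"
      then show "p \<in> (madj H \<union> {(l,l)})\<^sup>*" using rtrancl_mono[of "madj H" "madj H \<union> {(l,l)}"] by auto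
    qed
    then show ?thesis using m by simp
  qed
  have iso: "v = l" if "(l,v) \<in> (madj H)\<^sup>*" for v
    using that
  proof (induction rule: rtrancl_induct)
    case base then show ?case by simp
  next
    case (step y z)
    then show ?case using H by (auto simp: madj_def)
  qed
  have cl: "(madj H)\<^sup>*``{l} = {l}" using iso by auto
  have "S // (madj H)\<^sup>* = insert ((madj H)\<^sup>*``{l}) ((S - {l}) // (madj H)\<^sup>*)"
    using S(2) by (auto simp: quotient_def)
  moreover have "{l} \<notin> (S - {l}) // (madj H)\<^sup>*"
  proof
    assume "{l} \<in> (S - {l}) // (madj H)\<^sup>*"
    then obtain v where "v \<in> S - {l}" "{l} = (madj H)\<^sup>*``{v}" by (auto simp: quotient_def)
    then show False by auto
  qed
  moreover have "finite ((S - {l}) // (madj H)\<^sup>*)"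
    using S(1) by (simp add: quotient_image)
  ultimately show ?thesis using cl rt by (simp add: comps_def G_def)
qed


definition blk :: "nat set set \<Rightarrow> nat \<Rightarrow> nat set" where
  "blk P v = (THE B. B \<in> P \<and> v \<in> B)"

lemma part_disj: "partition_on S P \<Longrightarrow> B \<in> P \<Longrightarrow> C \<in> P \<Longrightarrow> B \<noteq> C \<Longrightarrow> B \<inter> C = {}"
  unfolding partition_on_def by (meson disjnt_def pairwiseD)

lemma part_sub: "partition_on S P \<Longrightarrow> B \<in> P \<Longrightarrow> B \<subseteq> S"
  unfolding partition_on_def by auto

lemma part_ne: "partition_on S P \<Longrightarrow> B \<in> P \<Longrightarrow> B \<noteq> {}"
  unfolding partition_on_def by auto

lemma blk_eq: assumes "partition_on S P" "B \<in> P" "v \<in> B" shows "blk P v = B"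
  unfolding blk_def
proof (rule the_equality)
  show "B \<in> P \<and> v \<in> B" using assms by auto
  show "C = B" if "C \<in> P \<and> v \<in> C" for C using that assms part_disj by blast
qed

lemma blk: assumes "partition_on S P" "v \<in> S" shows "blk P v \<in> P" "v \<in> blk P v"
proof -
  obtain B where "B \<in> P" "v \<in> B" using assms unfolding partition_on_def by auto
  then have "blk P v = B" using blk_eq[OF assms(1)] by blast
  then show "blk P v \<in> P" "v \<in> blk P v" using \<open>B \<in> P\<close> \<open>v \<in> B\<close> by simp_all
qed

lemma finite_part: "finite S \<Longrightarrow> partition_on S P \<Longrightarrow> finite P"
  using finite_elements by blast

lemma finite_blk: "finite S \<Longrightarrow> partition_on S P \<Longrightarrow> B \<in> P \<Longrightarrow> finite B"
  by (meson part_sub finite_subset)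

definition ind :: "bool \<Rightarrow> nat" where "ind b = (if b then 1 else 0)"

definition valid :: "nat set \<Rightarrow> nat set set \<Rightarrow> (nat set \<Rightarrow> nat set multiset) \<Rightarrow> bool" where
  "valid S P E \<longleftrightarrow> (\<forall>B\<in>P. \<forall>e\<in>#E B. e \<subseteq> S \<and> (card e = 1 \<or> card e = 2)) \<and>
     (\<forall>B\<in>P. \<forall>v\<in>S. mdeg (E B) v = ind (v\<in>B) + ind (prv S v \<in> B))"

definition gr :: "nat set set \<Rightarrow> (nat set \<Rightarrow> nat set multiset) \<Rightarrow> nat set multiset" where
  "gr P E = (\<Sum>B\<in>P. E B)"

definition redD :: "nat set \<Rightarrow> nat set set \<Rightarrow> nat \<Rightarrow> nat set" where
  "redD S P l = (blk P (prv S l) \<union> blk P l) - {l}"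
definition redP :: "nat set \<Rightarrow> nat set set \<Rightarrow> nat \<Rightarrow> nat set set" where
  "redP S P l = insert (redD S P l) (P - {blk P (prv S l), blk P l})"

context
  fixes S :: "nat set" and P :: "nat set set" and E :: "nat set \<Rightarrow> nat set multiset" and l :: nat
  assumes fS: "finite S" and c2: "card S \<ge> 2" and pS: "partition_on S P" and vE: "valid S P E"
    and lS: "l \<in> S"
begin

abbreviation "A \<equiv> blk P (prv S l)"
abbreviation "B \<equiv> blk P l"
abbreviation "D \<equiv> redD S P l"
abbreviation "P' \<equiv> redP S P l"
abbreviation "p \<equiv> prv S l"

lemma Sne: "S \<noteq> {}" using lS by auto
lemma pS_in: "p \<in> S" using prv_in[OF fS Sne] .
lemma p_ne: "p \<noteq> l" using prv_neq[OF fS lS c2] .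
lemma A_P: "A \<in> P" and p_A: "p \<in> A" using blk[OF pS pS_in] by auto
lemma B_P: "B \<in> P" and l_B: "l \<in> B" using blk[OF pS lS] by auto
lemma AB_disj: "A \<noteq> B \<Longrightarrow> A \<inter> B = {}" using part_disj[OF pS A_P B_P] .
lemma l_notA: "A \<noteq> B \<Longrightarrow> l \<notin> A" using AB_disj l_B by auto
lemma p_D: "p \<in> D" using p_A p_ne by (auto simp: redD_def)
lemma D_sub: "D \<subseteq> S - {l}" using part_sub[OF pS A_P] part_sub[OF pS B_P] by (auto simp: redD_def)
lemma finP: "finite P" using finite_part[OF fS pS] .

lemma other_disj: "C \<in> P \<Longrightarrow> C \<noteq> A \<Longrightarrow> C \<noteq> B \<Longrightarrow> C \<inter> (A \<union> B) = {}"
proof -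
  assume a: "C \<in> P" "C \<noteq> A" "C \<noteq> B"
  show ?thesis using part_disj[OF pS a(1) A_P a(2)] part_disj[OF pS a(1) B_P a(3)] by auto
qed

lemma D_notin: "D \<notin> P - {A, B}"
  using other_disj p_D p_A by (auto simp: redD_def)

lemma part_red: "partition_on (S - {l}) P'"
proof (rule partition_onI)
  show "\<Union>P' = S - {l}"
  proof
    show "\<Union>P' \<subseteq> S - {l}"
    proof
      fix v assume "v \<in> \<Union>P'"
      then obtain X where X: "X \<in> P'" "v \<in> X" by auto
      then have "X = D \<or> X \<in> P - {A,B}" by (auto simp: redP_def)
      then show "v \<in> S - {l}"
      proof
        assume "X = D" then show ?thesis using D_sub X by auto
      next
        assume XP: "X \<in> P - {A,B}"
        then have "X \<subseteq> S" "l \<notin> X" using part_sub[OF pS] other_disj l_B by auto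
        then show ?thesis using X by auto
      qed
    qed
    show "S - {l} \<subseteq> \<Union>P'"
    proof
      fix v assume v: "v \<in> S - {l}"
      then obtain C where C: "C \<in> P" "v \<in> C" using pS unfolding partition_on_def by auto
      then show "v \<in> \<Union>P'" using v by (cases "C = A \<or> C = B") (auto simp: redP_def redD_def)
    qed
  qed
  show "disjnt X Y" if "X \<in> P'" "Y \<in> P'" "X \<noteq> Y" for X Y
  proof -
    have o: "disjnt X Y" if "X \<in> P - {A,B}" "Y \<in> P - {A,B}" "X \<noteq> Y" for X Y
      using part_disj[OF pS] that by (auto simp: disjnt_def)
    have o2: "disjnt X D" if "X \<in> P - {A,B}" for X
      using other_disj that by (auto simp: disjnt_def redD_def)
    have XY: "X = D \<or> X \<in> P - {A,B}" "Y = D \<or> Y \<in> P - {A,B}" using that(1,2) by (auto simp: redP_def)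
    show ?thesis using XY that(3) o o2 by (metis disjnt_sym)
  qed
  show "{} \<notin> P'" using p_D part_ne[OF pS] by (auto simp: redP_def)
qed

lemma card_red: "card P' = (if A = B then card P else card P - 1)"
proof -
  have h1: "card P' = card (P - {A,B}) + 1"
    using D_notin finP by (simp add: redP_def)
  have h2: "card (P - {A,B}) = card P - card {A,B}"
    using A_P B_P finP by (simp add: card_Diff_subset)
  have h3: "card P \<ge> card {A,B}" using A_P B_P finP by (simp add: card_mono)
  show ?thesis
  proof (cases "A = B")
    case True
    then have "card {A,B} = 1" by simp
    then show ?thesis using h1 h2 h3 True by simp
  next
    case False
    then have "card {A,B} = 2" by simp
    then show ?thesis using h1 h2 h3 False by simp
  qed
qed

lemma degE: "C \<in> P \<Longrightarrow> v \<in> S \<Longrightarrow> mdeg (E C) v = ind (v\<in>C) + ind (prv S v \<in> C)"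
  using vE unfolding valid_def by auto
lemma edgeE: "C \<in> P \<Longrightarrow> e \<in># E C \<Longrightarrow> e \<subseteq> S \<and> (card e = 1 \<or> card e = 2)"
  using vE unfolding valid_def by auto

lemma prv_red: "v \<in> S - {l} \<Longrightarrow> prv (S - {l}) v = (if prv S v = l then p else prv S v)"
  using prv_remove[OF fS lS _ _ c2] by auto

lemma other_l0: "C \<in> P \<Longrightarrow> C \<noteq> A \<Longrightarrow> C \<noteq> B \<Longrightarrow> mdeg (E C) l = 0"
  using degE[OF _ lS] other_disj l_B p_A by (auto simp: ind_def)

lemma other_deg: assumes "C \<in> P" "C \<noteq> A" "C \<noteq> B" "v \<in> S - {l}"
  shows "mdeg (E C) v = ind (v\<in>C) + ind (prv (S - {l}) v \<in> C)"
  using degE[of C v] assms prv_red[OF assms(4)] other_disj[OF assms(1-3)] l_B p_A by (auto simp: ind_def)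

lemma F_deg: assumes "v \<in> S - {l}"
  shows "mdeg (if A = B then E B else E A + E B) v = ind (v \<in> D) + ind (prv (S - {l}) v \<in> D)"
proof -
  have vS: "v \<in> S" using assms by auto
  show ?thesis
  proof (cases "A = B")
    case True
    have Deq: "D = B - {l}" using True by (simp add: redD_def)
    have pB: "p \<in> B" using True p_A by simp
    have d: "mdeg (E B) v = ind (v\<in>B) + ind (prv S v \<in> B)" using degE[OF B_P vS] .
    have vl: "v \<noteq> l" using assms by auto
    show ?thesis
    proof (cases "prv S v = l")
      case True
      then have "prv (S - {l}) v = p" using prv_red[OF assms] by simp
      then show ?thesis using d True True pB vl l_B p_ne unfolding Deq \<open>A = B\<close> by (simp add: ind_def)
    next
      case False
      then have "prv (S - {l}) v = prv S v" using prv_red[OF assms] by simp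
      then show ?thesis using d False vl unfolding Deq \<open>A = B\<close> by (simp add: ind_def)
    qed
  next
    case False
    have Deq: "D = (A \<union> B) - {l}" by (simp add: redD_def)
    have dj: "A \<inter> B = {}" using AB_disj[OF False] .
    have d: "mdeg (E A + E B) v = ind (v\<in>A) + ind (prv S v \<in> A) + (ind (v\<in>B) + ind (prv S v \<in> B))"
      using degE[OF B_P vS] degE[OF A_P vS] by simp
    have vl: "v \<noteq> l" using assms by auto
    show ?thesis
    proof (cases "prv S v = l")
      case True
      then have "prv (S - {l}) v = p" using prv_red[OF assms] by simp
      then show ?thesis using d True l_B p_A p_ne vl dj \<open>A \<noteq> B\<close> unfolding Deq by (auto simp: ind_def)
    next
      case False
      then have "prv (S - {l}) v = prv S v" using prv_red[OF assms] by simp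
      then show ?thesis using d False vl dj \<open>A \<noteq> B\<close> unfolding Deq by (auto simp: ind_def)
    qed
  qed
qed

lemma F_l: "mdeg (if A = B then E B else E A + E B) l = 2"
  using degE[OF B_P lS] degE[OF A_P lS] l_B p_A AB_disj
  by (cases "A = B") (auto simp: ind_def)

lemma gr_split: "gr P E = gr (P - {A,B}) E + (if A = B then E B else E A + E B)"
proof -
  have "gr P E = (\<Sum>C\<in>P - {A,B}. E C) + (\<Sum>C\<in>{A,B}. E C)"
    unfolding gr_def using finP A_P B_P by (metis add.commute empty_subsetI insert_subset sum.subset_diff)
  then show ?thesis by (cases "A = B") (auto simp: gr_def)
qed

lemma gr_red: "gr P' E' = gr (P - {A,B}) E + E' D" if "\<forall>C\<in>P - {A,B}. E' C = E C"
proof -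
  have "gr P' E' = E' D + (\<Sum>C\<in>P - {A,B}. E' C)"
    unfolding gr_def redP_def using D_notin finP by simp
  also have "(\<Sum>C\<in>P - {A,B}. E' C) = gr (P - {A,B}) E" unfolding gr_def using that by simp
  finally show ?thesis by (simp add: add.commute)
qed


lemma mdeg_other_sum: "mdeg (gr (P - {A,B}) E) l = 0"
  unfolding gr_def using finP other_l0 by (simp add: mdeg_sum)

lemma R_loop:
  assumes loop: "{l} \<in># E B"
  shows "A = B"
    "valid (S - {l}) P' (\<lambda>X. if X = D then E B - {#{l}#} else E X)"
    "card (comps S (gr P E)) = card (comps (S - {l}) (gr P' (\<lambda>X. if X = D then E B - {#{l}#} else E X))) + 1"
proof -
  define E' where "E' = (\<lambda>X. if X = D then E B - {#{l}#} else E X)"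
  have d2: "mdeg (E B) l \<ge> 2" using mdeg_ge2[OF loop] .
  have dl: "mdeg (E B) l = ind (l \<in> B) + ind (p \<in> B)" using degE[OF B_P lS] .
  then have "p \<in> B" using d2 by (auto simp: ind_def split: if_splits)
  then show AB: "A = B" using blk_eq[OF pS B_P] by simp
  have dl2: "mdeg (E B) l = 2" using dl \<open>p \<in> B\<close> l_B by (simp add: ind_def)
  have l0: "mdeg (E B - {#{l}#}) l = 0" using mdeg_minus[OF loop] dl2 by (simp add: mdeg_single)
  have FB: "(if A = B then E B else E A + E B) = E B" using AB by simp
  have vD: "valid (S - {l}) P' E'"
    unfolding valid_def
  proof (rule conjI; intro ballI)
    fix X e assume X: "X \<in> P'" and e: "e \<in># E' X"
    from X have "X = D \<or> X \<in> P - {A,B}" by (auto simp: redP_def)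
    then show "e \<subseteq> S - {l} \<and> (card e = 1 \<or> card e = 2)"
    proof
      assume XD: "X = D"
      then have e': "e \<in># E B - {#{l}#}" using e by (simp add: E'_def)
      then have "e \<in># E B" by (meson in_diffD)
      then have "e \<subseteq> S \<and> (card e = 1 \<or> card e = 2)" using edgeE[OF B_P] by blast
      moreover have "l \<notin> e" using mdeg_zero[OF l0 e'] .
      ultimately show ?thesis by auto
    next
      assume XP: "X \<in> P - {A,B}"
      then have "X \<noteq> D" using D_notin by auto
      then have e': "e \<in># E X" using e by (simp add: E'_def)
      then have "e \<subseteq> S \<and> (card e = 1 \<or> card e = 2)" using edgeE XP by blast
      moreover have "l \<notin> e" using mdeg_zero[OF other_l0 e'] XP by auto
      ultimately show ?thesis by auto
    qed
  next
    fix X v assume X: "X \<in> P'" and v: "v \<in> S - {l}"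
    from X have "X = D \<or> X \<in> P - {A,B}" by (auto simp: redP_def)
    then show "mdeg (E' X) v = ind (v \<in> X) + ind (prv (S - {l}) v \<in> X)"
    proof
      assume XD: "X = D"
      have "mdeg (E' X) v = mdeg (E B) v" using XD mdeg_minus[OF loop, of v] v
        by (simp add: E'_def mdeg_single)
      then show ?thesis using F_deg[OF v] FB XD by simp
    next
      assume XP: "X \<in> P - {A,B}"
      then have "X \<noteq> D" using D_notin by auto
      then show ?thesis using other_deg[of X v] XP v by (simp add: E'_def)
    qed
  qed
  then show "valid (S - {l}) P' (\<lambda>X. if X = D then E B - {#{l}#} else E X)" by (simp add: E'_def)
  have g1: "gr P E = gr (P - {A,B}) E + E B" using gr_split FB by simp
  have oth: "\<forall>C\<in>P - {A,B}. E' C = E C" using D_notin by (auto simp: E'_def)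
  have g2: "gr P' E' = gr (P - {A,B}) E + (E B - {#{l}#})"
    using gr_red[OF oth] by (simp add: E'_def)
  have gg: "gr P E = gr P' E' + {#{l}#}" using g1 g2 loop
    by (metis (no_types, lifting) add.assoc insert_DiffM2 add_mset_add_single)
  have H0: "\<forall>e\<in>#gr P' E'. l \<notin> e"
  proof
    fix e assume "e \<in># gr P' E'"
    moreover have "mdeg (gr P' E') l = 0" using g2 l0 mdeg_other_sum by simp
    ultimately show "l \<notin> e" using mdeg_zero by blast
  qed
  show "card (comps S (gr P E)) = card (comps (S - {l}) (gr P' (\<lambda>X. if X = D then E B - {#{l}#} else E X))) + 1"
    using comps_loop[OF fS lS H0] gg by (simp add: E'_def)
qed

lemma R_con:
  assumes e1: "e1 \<in># E B" "e1 = {l,x}" "x \<noteq> l"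
     and e2: "e2 \<in># (if A = B then E B - {#e1#} else E A)" "e2 = {l,y}" "y \<noteq> l"
  shows "valid (S - {l}) P' (\<lambda>X. if X = D then (if A = B then E B else E A + E B) - {#e1, e2#} + {#{x,y}#} else E X)"
    "card (comps S (gr P E)) = card (comps (S - {l}) (gr P' (\<lambda>X. if X = D then (if A = B then E B else E A + E B) - {#e1, e2#} + {#{x,y}#} else E X)))"
proof -
  define F where "F = (if A = B then E B else E A + E B)"
  define F0 where "F0 = F - {#e1, e2#}"
  define E' where "E' = (\<lambda>X. if X = D then F0 + {#{x,y}#} else E X)"
  have sub: "{#e1, e2#} \<subseteq># F"
  proof (cases "A = B")
    case True
    then have "e2 \<in># E B - {#e1#}" using e2 by simp
    then obtain R where R: "E B - {#e1#} = add_mset e2 R" by (metis multi_member_split)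
    have "E B = add_mset e1 (E B - {#e1#})" using e1(1) by simp
    then have "E B = add_mset e1 (add_mset e2 R)" using R by simp
    then show ?thesis using True by (simp add: F_def)
  next
    case False
    then have "e2 \<in># E A" using e2 by simp
    then obtain R1 where R1: "E A = add_mset e2 R1" by (metis multi_member_split)
    obtain R2 where R2: "E B = add_mset e1 R2" using e1(1) by (metis multi_member_split)
    show ?thesis using False by (simp add: F_def R1 R2)
  qed
  have FF: "F = F0 + {#e1, e2#}" using sub unfolding F0_def by (metis subset_mset.diff_add)
  have e1F: "e1 \<in># F" using mset_subset_eqD[OF sub, of e1] by simp
  have edgeF: "e \<subseteq> S \<and> (card e = 1 \<or> card e = 2)" if "e \<in># F" for e
  proof (cases "A = B")
    case True then show ?thesis using that edgeE[OF B_P] by (simp add: F_def)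
  next
    case False then show ?thesis using that edgeE[OF B_P] edgeE[OF A_P] by (auto simp: F_def)
  qed
  have e2F: "e2 \<in># F" using mset_subset_eqD[OF sub, of e2] by simp
  have xS: "x \<in> S" using edgeF[OF e1F] e1(2) by auto
  have yS: "y \<in> S" using edgeF[OF e2F] e2(2) by auto
  have degF: "mdeg F v = mdeg F0 v + ind (x = v) + ind (y = v)" if "v \<noteq> l" for v
    using that unfolding FF e1(2) e2(2) by (simp add: mdeg_add_mset mdeg_pair ind_def)
  have degFl: "mdeg F l = mdeg F0 l + 2"
    unfolding FF e1(2) e2(2) using e1(3) e2(3) by (simp add: mdeg_add_mset mdeg_pair)
  have F0l: "mdeg F0 l = 0" using degFl F_l by (simp add: F_def)
  have vD: "valid (S - {l}) P' E'"
    unfolding valid_def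
  proof (rule conjI; intro ballI)
    fix X e assume X: "X \<in> P'" and e: "e \<in># E' X"
    from X have "X = D \<or> X \<in> P - {A,B}" by (auto simp: redP_def)
    then show "e \<subseteq> S - {l} \<and> (card e = 1 \<or> card e = 2)"
    proof
      assume XD: "X = D"
      then have e': "e \<in># F0 + {#{x,y}#}" using e by (simp add: E'_def)
      show ?thesis
      proof (cases "e = {x,y}")
        case True
        then show ?thesis using xS yS e1(3) e2(3) by (cases "x = y") auto
      next
        case False
        then have e0: "e \<in># F0" using e' by simp
        then have "e \<in># F" using FF by simp
        then have "e \<subseteq> S \<and> (card e = 1 \<or> card e = 2)" using edgeF by blast
        moreover have "l \<notin> e" using mdeg_zero[OF F0l e0] .
        ultimately show ?thesis by auto
      qed
    next
      assume XP: "X \<in> P - {A,B}"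
      then have "X \<noteq> D" using D_notin by auto
      then have e': "e \<in># E X" using e by (simp add: E'_def)
      then have "e \<subseteq> S \<and> (card e = 1 \<or> card e = 2)" using edgeE XP by blast
      moreover have "l \<notin> e" using mdeg_zero[OF other_l0 e'] XP by auto
      ultimately show ?thesis by auto
    qed
  next
    fix X v assume X: "X \<in> P'" and v: "v \<in> S - {l}"
    from X have "X = D \<or> X \<in> P - {A,B}" by (auto simp: redP_def)
    then show "mdeg (E' X) v = ind (v \<in> X) + ind (prv (S - {l}) v \<in> X)"
    proof
      assume XD: "X = D"
      have "mdeg (E' X) v = mdeg F v" using XD degF[of v] v
        by (simp add: E'_def mdeg_pair ind_def mdeg_add_mset)
      then show ?thesis using F_deg[OF v] XD by (simp add: F_def)
    next
      assume XP: "X \<in> P - {A,B}"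
      then have "X \<noteq> D" using D_notin by auto
      then show ?thesis using other_deg[of X v] XP v by (simp add: E'_def)
    qed
  qed
  then show "valid (S - {l}) P' (\<lambda>X. if X = D then (if A = B then E B else E A + E B) - {#e1, e2#} + {#{x,y}#} else E X)"
    using vD by (simp only: E'_def F0_def F_def)
  define H where "H = gr (P - {A,B}) E + F0"
  have g1: "gr P E = H + {#{l,x},{l,y}#}" using gr_split FF e1(2) e2(2)
    by (simp add: H_def F_def add.assoc)
  have oth: "\<forall>C\<in>P - {A,B}. E' C = E C" using D_notin by (auto simp: E'_def)
  have g2: "gr P' E' = H + {#{x,y}#}"
    using gr_red[OF oth] by (simp add: E'_def H_def add.assoc)
  have H0: "\<forall>e\<in>#H. l \<notin> e"
  proof
    fix e assume "e \<in># H"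
    moreover have "mdeg H l = 0" using F0l mdeg_other_sum by (simp add: H_def)
    ultimately show "l \<notin> e" using mdeg_zero by blast
  qed
  have "card (comps S (gr P E)) = card (comps (S - {l}) (gr P' E'))"
    unfolding g1 g2 by (rule comps_contract[OF fS lS xS yS e1(3) e2(3) H0])
  then show "card (comps S (gr P E)) = card (comps (S - {l}) (gr P' (\<lambda>X. if X = D then (if A = B then E B else E A + E B) - {#e1, e2#} + {#{x,y}#} else E X)))"
    by (simp only: E'_def F0_def F_def)
qed
end

hide_const (open) Submission.A Submission.B Submission.D Submission.P' Submission.p


definition can :: "nat set \<Rightarrow> nat set \<Rightarrow> nat set multiset" where
  "can S B = image_mset (\<lambda>b. {nxt S b, nxt B b}) (mset_set B)"

lemma pair_deg: "(if {a,b} = {v} then 2 else if v \<in> {a,b} then 1 else 0) = ind (a = v) + ind (b = v)"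
  by (auto simp: ind_def)

lemma mdeg_image: "finite B \<Longrightarrow> mdeg (image_mset (\<lambda>b. {f b, g b}) (mset_set B)) v
    = (\<Sum>b\<in>B. ind (f b = v) + ind (g b = v))"
proof (induction B rule: finite_induct)
  case empty then show ?case by simp
next
  case (insert x F)
  then show ?case by (simp add: mdeg_add_mset pair_deg[symmetric])
qed

lemma sum_ind_eq: "finite B \<Longrightarrow> (\<Sum>b\<in>B. ind (b = a)) = ind (a \<in> B)"
  by (simp add: ind_def)

lemma mdeg_can:
  assumes "finite S" "B \<subseteq> S" "B \<noteq> {}" "v \<in> S"
  shows "mdeg (can S B) v = ind (v \<in> B) + ind (prv S v \<in> B)"
proof -
  have fB: "finite B" using assms finite_subset by blast
  have 1: "(\<Sum>b\<in>B. ind (nxt S b = v)) = ind (prv S v \<in> B)"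
  proof -
    have "(\<Sum>b\<in>B. ind (nxt S b = v)) = (\<Sum>b\<in>B. ind (b = prv S v))"
    proof (intro sum.cong refl)
      fix b assume "b \<in> B"
      then have "b \<in> S" using assms(2) by auto
      then show "ind (nxt S b = v) = ind (b = prv S v)" using nxt_eq_iff[OF assms(1) _ assms(4)] by simp
    qed
    then show ?thesis using sum_ind_eq[OF fB] by simp
  qed
  have 2: "(\<Sum>b\<in>B. ind (nxt B b = v)) = ind (v \<in> B)"
  proof (cases "v \<in> B")
    case True
    have "(\<Sum>b\<in>B. ind (nxt B b = v)) = (\<Sum>b\<in>B. ind (b = prv B v))"
    proof (intro sum.cong refl)
      fix b assume "b \<in> B"
      then show "ind (nxt B b = v) = ind (b = prv B v)" using nxt_eq_iff[OF fB _ True] by simp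
    qed
    then show ?thesis using sum_ind_eq[OF fB] prv_in[OF fB assms(3)] True by (simp add: ind_def)
  next
    case False
    then have "\<forall>b\<in>B. nxt B b \<noteq> v" using nxt_in[OF fB assms(3)] by metis
    then show ?thesis using False by (simp add: ind_def)
  qed
  show ?thesis unfolding can_def mdeg_image[OF fB] sum.distrib 1 2 by simp
qed

lemma valid_can:
  assumes "finite S" "partition_on S P"
  shows "valid S P (can S)"
  unfolding valid_def
proof (rule conjI; intro ballI)
  fix B e assume B: "B \<in> P" and e: "e \<in># can S B"
  have BS: "B \<subseteq> S" "B \<noteq> {}" using part_sub[OF assms(2) B] part_ne[OF assms(2) B] by auto
  have fB: "finite B" using BS assms finite_subset by blast
  obtain b where b: "b \<in> B" "e = {nxt S b, nxt B b}" using e fB by (auto simp: can_def)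
  have "nxt S b \<in> S" "nxt B b \<in> S" using nxt_in[OF assms(1)] nxt_in[OF fB BS(2)] BS b by auto
  then show "e \<subseteq> S \<and> (card e = 1 \<or> card e = 2)" using b by (cases "nxt S b = nxt B b") auto
next
  fix B v assume B: "B \<in> P" and v: "v \<in> S"
  show "mdeg (can S B) v = ind (v \<in> B) + ind (prv S v \<in> B)"
    using mdeg_can[OF assms(1) part_sub[OF assms(2) B] part_ne[OF assms(2) B] v] .
qed

lemma can_other:
  assumes "finite S" "card S \<ge> 2" "l \<in> S" "C \<subseteq> S" "l \<notin> C" "prv S l \<notin> C"
  shows "can (S - {l}) C = can S C"
  unfolding can_def
proof (rule image_mset_cong)
  fix b assume "b \<in># mset_set C"
  then have b: "b \<in> C" using finite_subset[OF assms(4,1)] by simp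
  have "nxt S b \<noteq> l" using nxt_eq_iff[OF assms(1) _ assms(3), of b] b assms(4,6) by auto
  then have "nxt (S - {l}) b = nxt S b" using nxt_remove[OF assms(1,3) _ _ assms(2), of b] b assms(4,5) by auto
  then show "{nxt (S - {l}) b, nxt C b} = {nxt S b, nxt C b}" by simp
qed

lemma can_loop:
  assumes "finite S" "card S \<ge> 2" "l \<in> B" "prv S l \<in> B" "B \<subseteq> S"
  shows "can S B = can (S - {l}) (B - {l}) + {#{l}#}"
proof -
  define p where "p = prv S l"
  have lS: "l \<in> S" using assms by auto
  have pl: "p \<noteq> l" using prv_neq[OF assms(1) lS assms(2)] by (simp add: p_def)
  have pB: "p \<in> B" using assms by (simp add: p_def)
  have fB: "finite B" using assms finite_subset by blast
  have cB: "card B \<ge> 2"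
  proof -
    have "{p, l} \<subseteq> B" using pB assms(3) by auto
    then have "card {p,l} \<le> card B" using fB card_mono by blast
    then show ?thesis using pl by simp
  qed
  have nSp: "nxt S p = l" using nxt_prv[OF assms(1) lS] by (simp add: p_def)
  have nBp: "nxt B p = l" using nxt_subset[OF assms(1,5), of p] nSp assms(3) by simp
  have pBl: "prv B l = p" using prv_subset[OF assms(1,5), of l] assms(4) by (simp add: p_def)
  have nS'p: "nxt (S - {l}) p = nxt S l" using nxt_remove[OF assms(1) lS _ pl assms(2)] nSp pB assms(5) by auto
  have nB'p: "nxt (B - {l}) p = nxt B l" using nxt_remove[OF fB assms(3) pB pl cB] nBp by simp
  have rest: "{nxt (S - {l}) b, nxt (B - {l}) b} = {nxt S b, nxt B b}" if b: "b \<in> B - {l, p}" for b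
  proof -
    have bS: "b \<in> S" using b assms(5) by auto
    have "nxt S b \<noteq> l" using nxt_eq_iff[OF assms(1) bS lS] b by (auto simp: p_def)
    then have 1: "nxt (S - {l}) b = nxt S b" using nxt_remove[OF assms(1) lS bS _ assms(2)] b by auto
    have "nxt B b \<noteq> l" using nxt_eq_iff[OF fB _ assms(3), of b] b pBl by auto
    then have 2: "nxt (B - {l}) b = nxt B b" using nxt_remove[OF fB assms(3) _ _ cB, of b] b by auto
    show ?thesis using 1 2 by simp
  qed
  have m2: "mset_set (B - {l}) = add_mset p (mset_set (B - {l, p}))"
  proof -
    have "p \<in> B - {l}" using pB pl by auto
    then have "mset_set (B - {l}) = add_mset p (mset_set (B - {l} - {p}))"
      using fB by (simp add: mset_set.remove)
    moreover have "B - {l} - {p} = B - {l, p}" by auto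
    ultimately show ?thesis by simp
  qed
  have m1: "mset_set B = add_mset l (add_mset p (mset_set (B - {l, p})))"
    using m2 fB assms(3) by (simp add: mset_set.remove)
  have r: "image_mset (\<lambda>b. {nxt (S - {l}) b, nxt (B - {l}) b}) (mset_set (B - {l, p}))
        = image_mset (\<lambda>b. {nxt S b, nxt B b}) (mset_set (B - {l, p}))"
    by (rule image_mset_cong) (use rest fB in auto)
  show ?thesis unfolding can_def m1 m2 using r nSp nBp nS'p nB'p by simp
qed

lemma can_single:
  assumes "finite S" "card S \<ge> 2" "l \<in> S" "A \<subseteq> S" "prv S l \<in> A" "l \<notin> A"
  shows "{l, nxt A (prv S l)} \<in># can S A"
    "can (S - {l}) A = can S A - {#{l, nxt A (prv S l)}#} + {#{nxt S l, nxt A (prv S l)}#}"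
    "\<forall>e\<in>#can (S - {l}) A. nxt S l \<in> e \<longrightarrow> e = {nxt S l, nxt A (prv S l)}"
proof -
  define p where "p = prv S l"
  define q where "q = nxt A p"
  have pl: "p \<noteq> l" using prv_neq[OF assms(1,3,2)] by (simp add: p_def)
  have pA: "p \<in> A" using assms by (simp add: p_def)
  have fA: "finite A" using assms finite_subset by blast
  have nSp: "nxt S p = l" using nxt_prv[OF assms(1,3)] by (simp add: p_def)
  have nS'p: "nxt (S - {l}) p = nxt S l" using nxt_remove[OF assms(1,3) _ pl assms(2)] nSp pA assms(4) by auto
  have m1: "mset_set A = add_mset p (mset_set (A - {p}))"
    using fA pA by (simp add: mset_set.remove)
  have rest: "nxt (S - {l}) b = nxt S b" if b: "b \<in> A - {p}" for b
  proof -
    have bS: "b \<in> S" using b assms(4) by auto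
    have "nxt S b \<noteq> l" using nxt_eq_iff[OF assms(1) bS assms(3)] b by (auto simp: p_def)
    then show ?thesis using nxt_remove[OF assms(1,3) bS _ assms(2)] b assms(6) by auto
  qed
  have r: "image_mset (\<lambda>b. {nxt (S - {l}) b, nxt A b}) (mset_set (A - {p}))
        = image_mset (\<lambda>b. {nxt S b, nxt A b}) (mset_set (A - {p}))"
    by (rule image_mset_cong) (use rest fA in auto)
  have cS: "can S A = add_mset {l, q} (image_mset (\<lambda>b. {nxt S b, nxt A b}) (mset_set (A - {p})))"
    unfolding can_def m1 using nSp by (simp add: q_def)
  have cS': "can (S - {l}) A = add_mset {nxt S l, q} (image_mset (\<lambda>b. {nxt S b, nxt A b}) (mset_set (A - {p})))"
    unfolding can_def m1 using nS'p r by (simp add: q_def)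
  show "{l, nxt A (prv S l)} \<in># can S A" using cS by (simp add: q_def p_def)
  show "can (S - {l}) A = can S A - {#{l, nxt A (prv S l)}#} + {#{nxt S l, nxt A (prv S l)}#}"
    using cS cS' by (simp add: q_def p_def)
  show "\<forall>e\<in>#can (S - {l}) A. nxt S l \<in> e \<longrightarrow> e = {nxt S l, nxt A (prv S l)}"
  proof (intro ballI impI)
    fix e assume e: "e \<in># can (S - {l}) A" and x: "nxt S l \<in> e"
    show "e = {nxt S l, nxt A (prv S l)}"
    proof (cases "e = {nxt S l, q}")
      case True then show ?thesis by (simp add: q_def p_def)
    next
      case False
      then obtain b where b: "b \<in> A - {p}" "e = {nxt S b, nxt A b}" using e cS' fA by auto
      have bS: "b \<in> S" using b assms(4) by auto
      have "nxt S b \<noteq> nxt S l" using nxt_inj[OF assms(1) bS assms(3)] b assms(6) by auto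
      then have nA: "nxt A b = nxt S l" using x b by auto
      define xx where "xx = nxt S l"
      have xA: "xx \<in> A" using nA nxt_in[OF fA] pA by (metis empty_iff xx_def)
      have xl: "xx \<noteq> l" using nxt_neq[OF assms(1,3,2)] by (simp add: xx_def)
      have xS: "xx \<in> S" using xA assms(4) by auto
      have "prv S xx = l" using prv_nxt[OF assms(1,3)] by (simp add: xx_def)
      then have "prv (S - {l}) xx = p"
        using prv_remove[OF assms(1,3) xS xl assms(2)] by (simp add: p_def)
      then have "prv A xx = p"
        using prv_subset[of "S - {l}" A xx] assms(1,4,6) pA by auto
      moreover have "prv A xx = b" using prv_nxt[OF fA] b nA by (metis DiffD1 xx_def)
      ultimately show ?thesis using b by auto
    qed
  qed
qed


lemma crossingI:
  assumes "X \<in> Q" "Y \<in> Q" "X \<noteq> Y" "i < j" "j < i'" "i' < j'"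
   "i \<in> X" "i' \<in> X" "j \<in> Y" "j' \<in> Y" shows "crossing Q"
  unfolding crossing_def
proof (rule bexI[OF _ assms(1)], rule bexI[OF _ assms(2)], rule conjI[OF assms(3)])
  show "\<exists>i j i' j'. i < j \<and> j < i' \<and> i' < j' \<and> i \<in> X \<and> i' \<in> X \<and> j \<in> Y \<and> j' \<in> Y"
    by (rule exI[of _ i], rule exI[of _ j], rule exI[of _ i'], rule exI[of _ j']) (simp add: assms)
qed

lemma crossingE:
  assumes "crossing Q"
  obtains X Y i j i' j' where "X \<in> Q" "Y \<in> Q" "X \<noteq> Y" "i < j" "j < i'" "i' < j'"
    "i \<in> X" "i' \<in> X" "j \<in> Y" "j' \<in> Y"
  using assms unfolding crossing_def by blast

lemma crossing_map:
  assumes "crossing Q" "\<And>X. X \<in> Q \<Longrightarrow> f X \<in> R \<and> X \<subseteq> f X" "inj_on f Q"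
  shows "crossing R"
proof -
  obtain X Y i j i' j' where w: "X \<in> Q" "Y \<in> Q" "X \<noteq> Y" "i < j" "j < i'" "i' < j'"
    "i \<in> X" "i' \<in> X" "j \<in> Y" "j' \<in> Y" using crossingE[OF assms(1)] by blast
  have "f X \<noteq> f Y" using assms(3) w(1-3) by (meson inj_onD)
  then show ?thesis using crossingI[of "f X" R "f Y" i j i' j'] w assms(2)[of X] assms(2)[of Y] by blast
qed

lemma noncross_remove_same:
  assumes "finite S" "partition_on S P" "l \<in> S" "card S \<ge> 2" "blk P (prv S l) = blk P l"
    "\<not> crossing (insert (blk P l - {l}) (P - {blk P l}))"
  shows "\<not> crossing P"
proof
  assume "crossing P"
  then obtain X Y i j i' j' where w: "X \<in> P" "Y \<in> P" "X \<noteq> Y" "i < j" "j < i'" "i' < j'"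
    "i \<in> X" "i' \<in> X" "j \<in> Y" "j' \<in> Y" by (rule crossingE)
  define B where "B = blk P l"
  define p where "p = prv S l"
  define Q where "Q = insert (B - {l}) (P - {B})"
  define f where "f Z = (if Z = B then B - {l} else Z)" for Z
  have Sne: "S \<noteq> {}" using assms(3) by auto
  have BP: "B \<in> P" "l \<in> B" using blk[OF assms(2,3)] by (auto simp: B_def)
  have pS: "p \<in> S" using prv_in[OF assms(1) Sne] by (simp add: p_def)
  have pB: "p \<in> B" using blk[OF assms(2) pS] assms(5) by (simp add: B_def p_def)
  have pl: "p \<noteq> l" using prv_neq[OF assms(1,3,4)] by (simp add: p_def)
  note pc = prv_char[OF assms(1) Sne, of l, folded p_def]
  have fQ: "f Z \<in> Q" if "Z \<in> P" for Z using that by (auto simp: f_def Q_def)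
  have fne: "f X \<noteq> f Y"
  proof -
    have "B - {l} \<notin> P - {B}"
    proof
      assume "B - {l} \<in> P - {B}"
      then have "(B - {l}) \<inter> B = {}" using part_disj[OF assms(2) _ BP(1)] by auto
      then show False using pB pl by auto
    qed
    then show ?thesis using w(1-3) by (auto simp: f_def)
  qed
  have mem: "v \<in> f Z" if "v \<in> Z" "v \<noteq> l" for v Z using that by (auto simp: f_def)
  have memp: "p \<in> f Z" if "l \<in> Z" "Z \<in> P" for Z
  proof -
    have "Z = B" using blk_eq[OF assms(2) that(2,1)] by (simp add: B_def)
    then show ?thesis using pB pl by (simp add: f_def)
  qed
  have dist: "i \<noteq> j \<and> i \<noteq> i' \<and> i \<noteq> j' \<and> j \<noteq> i' \<and> j \<noteq> j' \<and> i' \<noteq> j'" using w by auto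
  have pZ: "p \<in> Z \<longleftrightarrow> l \<in> Z" if Z: "Z \<in> P" for Z
  proof
    assume "p \<in> Z"
    then have "Z = B" using part_disj[OF assms(2) Z BP(1)] pB by blast
    then show "l \<in> Z" using BP by simp
  next
    assume "l \<in> Z"
    then have "Z = B" using part_disj[OF assms(2) Z BP(1)] BP by blast
    then show "p \<in> Z" using pB by simp
  qed
  have pX: "p \<in> X \<longleftrightarrow> l \<in> X" "p \<in> Y \<longleftrightarrow> l \<in> Y" using pZ w(1,2) by auto
  have iS: "i \<in> S" "j \<in> S" "i' \<in> S" "j' \<in> S" using w part_sub[OF assms(2)] by blast+
  have XYd: "X \<inter> Y = {}" using part_disj[OF assms(2) w(1,2,3)] .
  have "crossing Q"
  proof (cases "l \<in> {i, j, i', j'}")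
    case False
    then show ?thesis using crossingI[OF fQ[OF w(1)] fQ[OF w(2)] fne w(4-6)] mem w(7-10) by auto
  next
    case True
    then consider "l = i" | "l = j" | "l = i'" | "l = j'" by auto
    then show ?thesis
    proof cases
      case 1
      show ?thesis
      proof (cases "\<exists>c\<in>S. c < l")
        case True
        then have "p < l" using pc by auto
        then show ?thesis using crossingI[OF fQ[OF w(1)] fQ[OF w(2)] fne, of p j i' j'] w 1 memp mem dist by auto
      next
        case False
        then have "j' \<le> p" using pc iS by auto
        moreover have "j' \<noteq> p"
        proof
          assume "j' = p"
          then have "l \<in> Y" using pX w by simp
          then show False using part_disj[OF assms(2) w(1,2,3)] w(7) 1 by auto
        qed
        ultimately have "j' < p" by auto
        then show ?thesis using crossingI[OF fQ[OF w(2)] fQ[OF w(1)] fne[symmetric], of j i' j' p] w 1 memp mem dist by auto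
      qed
    next
      case 2
      then have ex: "\<exists>c\<in>S. c < l" using iS w by auto
      then have "p < l" "i \<le> p" using pc iS w 2 by auto
      moreover have "i \<noteq> p"
      proof
        assume "i = p"
        then have "l \<in> X" using pX w by simp
        then show False using XYd w 2 by auto
      qed
      ultimately show ?thesis using crossingI[OF fQ[OF w(1)] fQ[OF w(2)] fne, of i p i' j'] w 2 memp mem dist by auto
    next
      case 3
      then have ex: "\<exists>c\<in>S. c < l" using iS w by auto
      then have "p < l" "j \<le> p" using pc iS w 3 by auto
      moreover have "j \<noteq> p"
      proof
        assume "j = p"
        then have "l \<in> Y" using pX w by simp
        then show False using XYd w 3 by auto
      qed
      ultimately show ?thesis using crossingI[OF fQ[OF w(1)] fQ[OF w(2)] fne, of i j p j'] w 3 memp mem dist by auto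
    next
      case 4
      then have ex: "\<exists>c\<in>S. c < l" using iS w by auto
      then have "p < l" "i' \<le> p" using pc iS w 4 by auto
      moreover have "i' \<noteq> p"
      proof
        assume "i' = p"
        then have "l \<in> X" using pX w by simp
        then show False using XYd w 4 by auto
      qed
      ultimately show ?thesis using crossingI[OF fQ[OF w(1)] fQ[OF w(2)] fne, of i j i' p] w 4 memp mem dist by auto
    qed
  qed
  then show False using assms(6) by (simp add: Q_def B_def)
qed

lemma cross_remove_single:
  assumes "crossing P" shows "crossing (P - {{l}})"
proof -
  obtain X Y i j i' j' where w: "X \<in> P" "Y \<in> P" "X \<noteq> Y" "i < j" "j < i'" "i' < j'"
    "i \<in> X" "i' \<in> X" "j \<in> Y" "j' \<in> Y" using crossingE[OF assms] by blast
  have "X \<noteq> {l}" "Y \<noteq> {l}" using w by auto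
  then show ?thesis using crossingI[of X "P - {{l}}" Y i j i' j'] w by auto
qed

lemma noncross_sub:
  assumes "\<not> crossing P" "Q \<subseteq> P" shows "\<not> crossing Q"
  using assms crossing_map[of Q id P] by auto

lemma noncross_shrink:
  assumes "\<not> crossing P" "partition_on S P" "B \<in> P" "B - {l} \<noteq> {}"
  shows "\<not> crossing (insert (B - {l}) (P - {B}))"
proof
  assume c: "crossing (insert (B - {l}) (P - {B}))"
  define f where "f Z = (if Z = B - {l} then B else Z)" for Z
  have inj: "inj_on f (insert (B - {l}) (P - {B}))"
  proof (rule inj_onI)
    fix X Y assume X: "X \<in> insert (B - {l}) (P - {B})" and Y: "Y \<in> insert (B - {l}) (P - {B})" and e: "f X = f Y"
    have nb: "Z \<noteq> B - {l}" if "Z \<in> P - {B}" for Z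
    proof
      assume "Z = B - {l}"
      then have "Z \<inter> B = {}" "Z \<subseteq> B" using part_disj[OF assms(2) _ assms(3)] that by auto
      then show False using \<open>Z = B - {l}\<close> assms(4) by auto
    qed
    show "X = Y" using X Y e nb by (auto simp: f_def split: if_splits)
  qed
  have "crossing P" by (rule crossing_map[OF c _ inj]) (use assms(3) in \<open>auto simp: f_def\<close>)
  then show False using assms(1) by simp
qed

lemma noncross_singleton:
  assumes "finite S" "partition_on S P" "\<not> crossing P" "S \<noteq> {}"
    "\<forall>v\<in>S. blk P (prv S v) \<noteq> blk P v"
  shows "\<exists>l. {l} \<in> P"
proof -
  have PS: "P \<noteq> {}" using assms(2,4) unfolding partition_on_def by auto
  then obtain B0 where "B0 \<in> P" by auto
  then obtain B where B: "B \<in> P" "\<forall>C. C \<in> P \<longrightarrow> Max B - Min B \<le> Max C - Min C"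
    using ex_has_least_nat[of "\<lambda>C. C \<in> P" B0 "\<lambda>C. Max C - Min C"] by blast
  have fB: "finite B" using finite_blk[OF assms(1,2) B(1)] .
  have Bne: "B \<noteq> {}" using part_ne[OF assms(2) B(1)] .
  have BS: "B \<subseteq> S" using part_sub[OF assms(2) B(1)] .
  show ?thesis
  proof (cases "Min B = Max B")
    case True
    then have "B = {Min B}" using fB Bne Min_le Max_ge by (metis (no_types, lifting) le_antisym subsetI
      singleton_iff subset_singletonD Min_in empty_iff)
    then show ?thesis using B(1) by metis
  next
    case False
    define b where "b = Min B"
    define m where "m = Max B"
    have bB: "b \<in> B" "m \<in> B" using Min_in Max_in fB Bne by (auto simp: b_def m_def)
    have bm: "b < m" using False Min_le[OF fB] bB by (metis b_def le_neq_implies_less m_def)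
    have bS: "b \<in> S" using bB BS by auto
    define c where "c = nxt S b"
    have Sne: "S \<noteq> {}" using assms(4) .
    note nc = nxt_char[OF assms(1) Sne, of b, folded c_def]
    have ex: "\<exists>x\<in>S. b < x" using bm bB BS by auto
    have bc: "b < c" and cm: "c \<le> m" using nc ex bm bB BS by auto
    have cS: "c \<in> S" using nc by auto
    have "prv S c = b" using prv_nxt[OF assms(1) bS] by (simp add: c_def)
    then have "blk P b \<noteq> blk P c" using assms(5) cS by metis
    moreover have "blk P b = B" using blk_eq[OF assms(2) B(1) bB(1)] .
    ultimately have cB: "c \<notin> B" using blk_eq[OF assms(2) B(1)] by metis
    define C where "C = blk P c"
    have CP: "C \<in> P" "c \<in> C" using blk[OF assms(2) cS] by (auto simp: C_def)
    have CB: "C \<noteq> B" using cB CP by auto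
    have cm': "c < m" using cm cB bB by (metis le_neq_implies_less)
    have inside: "b < x \<and> x < m" if x: "x \<in> C" for x
    proof -
      have xB: "x \<notin> B" using x part_disj[OF assms(2) CP(1) B(1) CB] by auto
      have "x \<noteq> b" "x \<noteq> m" using xB bB by auto
      moreover have "\<not> x < b"
      proof
        assume "x < b"
        then show False using crossingI[OF CP(1) B(1) CB, of x b c m] x bc cm' CP bB assms(3) by auto
      qed
      moreover have "\<not> m < x"
      proof
        assume "m < x"
        then show False using crossingI[OF B(1) CP(1) CB[symmetric], of b c m x] x bc cm' CP bB assms(3) by auto
      qed
      ultimately show ?thesis by auto
    qed
    have fC: "finite C" using finite_blk[OF assms(1,2) CP(1)] .
    have Cne: "C \<noteq> {}" using CP by auto
    have "b < Min C" "Max C < m" using inside Min_in[OF fC Cne] Max_in[OF fC Cne] by auto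
    then have "Max C - Min C < Max B - Min B" using Min_le[OF fC] Max_ge[OF fC] CP
      by (simp add: b_def m_def) (metis diff_less_mono diff_less_mono2 le_less_trans less_imp_le_nat order.strict_trans2)
    then show ?thesis using B(2) CP(1) by (meson leD)
  qed
qed

lemma ivt:
  assumes "finite S" "partition_on S P" "a \<in> S" "b \<in> S" "a < b" "blk P a \<noteq> blk P b"
  shows "\<exists>v\<in>S. a < v \<and> v \<le> b \<and> blk P (prv S v) \<noteq> blk P v"
proof -
  define W where "W = {w\<in>S. a < w \<and> w \<le> b \<and> blk P w \<noteq> blk P a}"
  have fW: "finite W" using assms(1) by (simp add: W_def)
  have Wne: "W \<noteq> {}" using assms by (auto simp: W_def)
  define v where "v = Min W"
  have vW: "v \<in> W" using Min_in[OF fW Wne] by (simp add: v_def)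
  have vmin: "\<forall>w\<in>W. v \<le> w" using Min_le[OF fW] by (simp add: v_def)
  have Sne: "S \<noteq> {}" using assms(3) by auto
  have vS: "v \<in> S" "a < v" "v \<le> b" "blk P v \<noteq> blk P a" using vW by (auto simp: W_def)
  note pc = prv_char[OF assms(1) Sne, of v]
  have ex: "\<exists>c\<in>S. c < v" using vS assms(3) by auto
  then have pv: "prv S v < v" "a \<le> prv S v" "prv S v \<in> S" using pc assms(3) vS by auto
  have "blk P (prv S v) = blk P a"
  proof (rule ccontr)
    assume n: "blk P (prv S v) \<noteq> blk P a"
    then have "prv S v \<noteq> a" by auto
    then have "prv S v \<in> W" using pv vS n by (auto simp: W_def)
    then show False using vmin pv by auto
  qed
  then show ?thesis using vS by auto
qed

lemma change_points:
  assumes "finite S" "partition_on S P" "crossing P"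
  shows "4 \<le> card {v\<in>S. blk P (prv S v) \<noteq> blk P v}"
proof -
  obtain X Y i j i' j' where w: "X \<in> P" "Y \<in> P" "X \<noteq> Y" "i < j" "j < i'" "i' < j'"
    "i \<in> X" "i' \<in> X" "j \<in> Y" "j' \<in> Y" using crossingE[OF assms(3)] by blast
  have iS: "i \<in> S" "j \<in> S" "i' \<in> S" "j' \<in> S" using w part_sub[OF assms(2)] by blast+
  have bX: "blk P i = X" "blk P i' = X" using blk_eq[OF assms(2) w(1)] w by auto
  have bY: "blk P j = Y" "blk P j' = Y" using blk_eq[OF assms(2) w(2)] w by auto
  define T where "T = {v\<in>S. blk P (prv S v) \<noteq> blk P v}"
  obtain v1 where v1: "v1 \<in> T" "i < v1" "v1 \<le> j"
    using ivt[OF assms(1,2) iS(1,2) w(4)] bX bY w(3) by (auto simp: T_def)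
  obtain v2 where v2: "v2 \<in> T" "j < v2" "v2 \<le> i'"
    using ivt[OF assms(1,2) iS(2,3) w(5)] bX bY w(3) by (auto simp: T_def)
  obtain v3 where v3: "v3 \<in> T" "i' < v3" "v3 \<le> j'"
    using ivt[OF assms(1,2) iS(3,4) w(6)] bX bY w(3) by (auto simp: T_def)
  have Sne: "S \<noteq> {}" using iS by auto
  define mx where "mx = Max S"
  define mn where "mn = Min S"
  have mxS: "mx \<in> S" "\<forall>x\<in>S. x \<le> mx" using Max_in[OF assms(1) Sne] Max_ge[OF assms(1)] by (auto simp: mx_def)
  have mnS: "mn \<in> S" "\<forall>x\<in>S. mn \<le> x" using Min_in[OF assms(1) Sne] Min_le[OF assms(1)] by (auto simp: mn_def)
  obtain v4 where v4: "v4 \<in> T" "v4 \<le> i \<or> j' < v4"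
  proof (cases "blk P mx = blk P j'")
    case False
    then have "j' < mx" using mxS iS by (metis le_neq_implies_less)
    then obtain v where "v \<in> T" "j' < v" using ivt[OF assms(1,2) iS(4) mxS(1)] False by (auto simp: T_def)
    then show ?thesis using that by auto
  next
    case mxj: True
    show ?thesis
    proof (cases "blk P mn = blk P mx")
      case False
      have "\<not> (\<exists>c\<in>S. c < mn)" using mnS by (auto simp: not_less)
      then have "prv S mn = mx" using prv_char[OF assms(1) Sne, of mn] mxS
        by (metis le_antisym)
      then have "mn \<in> T" using False mnS by (auto simp: T_def)
      moreover have "mn \<le> i" using mnS iS by auto
      ultimately show ?thesis using that by auto
    next
      case True
      then have "blk P mn \<noteq> blk P i" using mxj bX bY w(3) by auto
      moreover then have "mn < i" using mnS iS by (metis le_neq_implies_less)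
      ultimately obtain v where "v \<in> T" "v \<le> i" using ivt[OF assms(1,2) mnS(1) iS(1)] by (auto simp: T_def)
      then show ?thesis using that by auto
    qed
  qed
  have "{v1, v2, v3, v4} \<subseteq> T" using v1 v2 v3 v4 by auto
  moreover have "card {v1, v2, v3, v4} = 4" using v1 v2 v3 v4 w by auto
  moreover have "finite T" using assms(1) by (simp add: T_def)
  ultimately show ?thesis unfolding T_def[symmetric] by (metis card_mono)
qed


lemma edge_other:
  assumes "l \<in> e" "card e = 1 \<or> card e = 2" "e \<noteq> {l}"
  shows "\<exists>x. x \<noteq> l \<and> e = {l, x}"
proof -
  have "card e \<noteq> 1"
  proof
    assume "card e = 1"
    then obtain a where "e = {a}" by (auto simp: card_Suc_eq)
    then show False using assms by auto
  qed
  then have "card e = 2" using assms by auto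
  then obtain a b where ab: "e = {a,b}" "a \<noteq> b" by (auto simp: card_Suc_eq numeral_2_eq_2)
  then show ?thesis using assms(1) by (metis insert_commute insertE singletonD)
qed

lemma mdeg_pos_edge: "mdeg E v \<noteq> 0 \<Longrightarrow> \<exists>e. e \<in># E \<and> v \<in> e"
proof (induction E)
  case empty then show ?case by simp
next
  case (add e E)
  then show ?case by (cases "v \<in> e") (auto simp: mdeg_add_mset split: if_splits)
qed

lemma get_edges:
  assumes fS: "finite S" and c2: "card S \<ge> 2" and pS: "partition_on S P" and vE: "valid S P E"
    and lS: "l \<in> S" and nl: "\<not> {l} \<in># E (blk P l)"
  shows "\<exists>e1 x e2 y. e1 \<in># E (blk P l) \<and> e1 = {l,x} \<and> x \<noteq> l \<and>
     e2 \<in># (if blk P (prv S l) = blk P l then E (blk P l) - {#e1#} else E (blk P (prv S l))) \<and> e2 = {l,y} \<and> y \<noteq> l"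
proof -
  define A where "A = blk P (prv S l)"
  define B where "B = blk P l"
  have Sne: "S \<noteq> {}" using lS by auto
  have pS': "prv S l \<in> S" using prv_in[OF fS Sne] .
  have AP: "A \<in> P" "prv S l \<in> A" using blk[OF pS pS'] by (auto simp: A_def)
  have BP: "B \<in> P" "l \<in> B" using blk[OF pS lS] by (auto simp: B_def)
  have degE: "mdeg (E C) v = ind (v\<in>C) + ind (prv S v \<in> C)" if "C \<in> P" "v \<in> S" for C v
    using vE that unfolding valid_def by auto
  have edgeE: "e \<subseteq> S \<and> (card e = 1 \<or> card e = 2)" if "C \<in> P" "e \<in># E C" for C e
    using vE that unfolding valid_def by auto
  have "mdeg (E B) l \<ge> 1" using degE[OF BP(1) lS] BP(2) by (simp add: ind_def)
  then obtain e1 where e1: "e1 \<in># E B" "l \<in> e1"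
    using mdeg_pos_edge[of "E B" l] by fastforce
  have "e1 \<noteq> {l}" using e1 nl by (auto simp: B_def)
  then obtain x where x: "x \<noteq> l" "e1 = {l,x}" using edge_other[OF e1(2)] edgeE[OF BP(1) e1(1)] by blast
  show ?thesis
  proof (cases "A = B")
    case True
    have d2: "mdeg (E B) l = 2" using degE[OF BP(1) lS] BP(2) AP True by (simp add: ind_def)
    have "mdeg (E B - {#e1#}) l = 1" using mdeg_minus[OF e1(1), of l] d2 x by (simp add: mdeg_pair)
    then obtain e2 where e2: "e2 \<in># E B - {#e1#}" "l \<in> e2"
      using mdeg_pos_edge[of "E B - {#e1#}" l] by auto
    have e2B: "e2 \<in># E B" using e2(1) by (meson in_diffD)
    have "e2 \<noteq> {l}" using e2B nl by (auto simp: B_def)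
    then obtain y where y: "y \<noteq> l" "e2 = {l,y}" using edge_other[OF e2(2)] edgeE[OF BP(1) e2B] by blast
    show ?thesis using e1 x e2 y True by (auto simp: A_def B_def)
  next
    case False
    have dA: "mdeg (E A) l = 1" using degE[OF AP(1) lS] BP AP False part_disj[OF pS AP(1) BP(1) False]
      by (auto simp: ind_def)
    then obtain e2 where e2: "e2 \<in># E A" "l \<in> e2"
      using mdeg_pos_edge[of "E A" l] by auto
    have "e2 \<noteq> {l}" using mdeg_ge2[of l "E A"] e2 dA by auto
    then obtain y where y: "y \<noteq> l" "e2 = {l,y}" using edge_other[OF e2(2)] edgeE[OF AP(1) e2(1)] by blast
    show ?thesis using e1 x e2 y False by (auto simp: A_def B_def)
  qed
qed


definition good :: "nat set \<Rightarrow> nat set set \<Rightarrow> (nat set \<Rightarrow> nat set multiset) \<Rightarrow> bool" where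
  "good S P E \<longleftrightarrow> card (comps S (gr P E)) + card P \<le> card S + 1 \<and>
     (card (comps S (gr P E)) + card P = card S + 1 \<longrightarrow> \<not> crossing P \<and> (\<forall>B\<in>P. E B = can S B))"

lemma good_of_less: "card (comps S (gr P E)) + card P < card S + 1 \<Longrightarrow> good S P E"
  by (simp add: good_def)

lemma card_P_pos: "finite S \<Longrightarrow> S \<noteq> {} \<Longrightarrow> partition_on S P \<Longrightarrow> card P \<ge> 1"
proof -
  assume a: "finite S" "S \<noteq> {}" "partition_on S P"
  have "P \<noteq> {}" using a unfolding partition_on_def by auto
  moreover have "finite P" using finite_part a by blast
  ultimately show ?thesis by (simp add: Suc_leI card_gt_0_iff)
qed

lemma loop_in_can: "finite S \<Longrightarrow> w \<in> S \<Longrightarrow> {w} \<in># can S S"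
proof -
  assume fS: "finite S" and w: "w \<in> S"
  have Sne: "S \<noteq> {}" using w by auto
  have "prv S w \<in> S" using prv_in[OF fS Sne] .
  moreover have "nxt S (prv S w) = w" using nxt_prv[OF fS w] .
  ultimately show ?thesis unfolding can_def using fS by (metis (no_types, lifting) image_eqI
        finite_set_mset_mset_set insert_absorb2 set_image_mset)
qed

lemma base_case:
  assumes "finite S" "card S = 1" "partition_on S P" "valid S P E"
  shows "good S P E"
proof -
  obtain s where S: "S = {s}" using assms(2) card_1_singletonE by blast
  have P: "P = {{s}}"
  proof -
    have "\<forall>B\<in>P. B = {s}" using part_sub[OF assms(3)] part_ne[OF assms(3)] S by blast
    moreover have "P \<noteq> {}" using assms(3) S unfolding partition_on_def by auto
    ultimately show ?thesis by auto
  qed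
  have pv: "prv S s = s" using S by (simp add: prv_single)
  have deg: "mdeg (E {s}) s = 2" using assms(4) P S pv unfolding valid_def by (auto simp: ind_def)
  have edges: "\<forall>e\<in>#E {s}. e = {s}"
  proof
    fix e assume "e \<in># E {s}"
    then have "e \<subseteq> {s}" "card e = 1 \<or> card e = 2" using assms(4) P S unfolding valid_def by auto
    then show "e = {s}" by (metis card.empty subset_singletonD zero_neq_numeral zero_neq_one)
  qed
  then have rep: "E {s} = replicate_mset (size (E {s})) {s}"
    by (metis set_mset_subset_singletonD subsetI singleton_iff)
  have "mdeg (replicate_mset n {s}) s = 2 * n" for n by (induction n) (auto simp: mdeg_add_mset)
  then have "size (E {s}) = 1" using deg rep by (metis mult_cancel1 mult.right_neutral numeral_2_eq_2 nat.simps(3))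
  then have Es: "E {s} = {#{s}#}" using rep by simp
  have g: "gr P E = {#{s}#}" using Es P by (simp add: gr_def)
  have cc: "card (comps S (gr P E)) = 1" by (simp add: comps_def S quotient_def)
  have nc: "\<not> crossing P" unfolding crossing_def P by auto
  have "can S {s} = {#{s}#}" using S by (simp add: can_def nxt_single)
  then show ?thesis unfolding good_def using cc P S nc Es by simp
qed


lemma step_cross_a:
  assumes fS: "finite S" and c2: "card S \<ge> 2" and pS: "partition_on S P" and vE: "valid S P E"
    and IH: "\<And>l P' E'. l \<in> S \<Longrightarrow> partition_on (S - {l}) P' \<Longrightarrow> valid (S - {l}) P' E' \<Longrightarrow> good (S - {l}) P' E'"
    and w: "X \<in> P" "Y \<in> P" "X \<noteq> Y" "i < j" "j < i'" "i' < j'" "i \<in> X" "i' \<in> X" "j \<in> Y" "j' \<in> Y"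
    and lS: "l \<in> S" "l \<notin> X" "l \<notin> Y"
  shows "card (comps S (gr P E)) + card P < card S + 1"
proof -
  define A where "A = blk P (prv S l)"
  define B where "B = blk P l"
  define D where "D = redD S P l"
  define P' where "P' = redP S P l"
  have Sne: "S \<noteq> {}" using lS by auto
  have BP: "B \<in> P" "l \<in> B" using blk[OF pS lS(1)] by (auto simp: B_def)
  have BX: "X \<noteq> B" "Y \<noteq> B" using BP lS by auto
  have pP': "partition_on (S - {l}) P'" using part_red[OF fS c2 pS vE lS(1)] by (simp add: P'_def)
  have Dn: "D \<notin> P - {A, B}" using D_notin[OF fS c2 pS vE lS(1)] by (simp add: D_def A_def B_def)
  define f where "f Z = (if Z = A then D else Z)" for Z
  have fin: "f Z \<in> P' \<and> Z \<subseteq> f Z" if "Z \<in> P" "Z \<noteq> B" "l \<notin> Z" for Z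
    using that by (auto simp: f_def P'_def redP_def D_def redD_def A_def B_def)
  have fne: "f X \<noteq> f Y"
    using w(1-3) BX Dn by (auto simp: f_def)
  have crP': "crossing P'"
    using crossingI[of "f X" P' "f Y" i j i' j'] fin[OF w(1) BX(1) lS(2)] fin[OF w(2) BX(2) lS(3)] fne w
    by blast
  have cardP: "card P \<le> card P' + 1" using card_red[OF fS c2 pS vE lS(1)] card_P_pos[OF fS Sne pS]
    by (simp add: P'_def)
  have cS: "card (S - {l}) + 1 = card S" using fS lS c2 by (simp add: card_Diff_singleton)
  show ?thesis
  proof (cases "{l} \<in># E B")
    case True
    define E' where "E' = (\<lambda>X. if X = D then E B - {#{l}#} else E X)"
    note R = R_loop[OF fS c2 pS vE lS(1) True[unfolded B_def]]
    have vE': "valid (S - {l}) P' E'" using R(2) unfolding E'_def P'_def D_def B_def .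
    have cc: "card (comps S (gr P E)) = card (comps (S - {l}) (gr P' E')) + 1"
      using R(3) unfolding E'_def P'_def D_def B_def .
    have cP: "card P' = card P" using card_red[OF fS c2 pS vE lS(1)] R(1) by (simp add: P'_def)
    have g: "good (S - {l}) P' E'" using IH[OF lS(1) pP' vE'] .
    then have "card (comps (S - {l}) (gr P' E')) + card P' \<le> card (S - {l})"
      using crP' unfolding good_def by linarith
    then show ?thesis using cc cP cS by linarith
  next
    case False
    obtain e1 x e2 y where ee: "e1 \<in># E B" "e1 = {l,x}" "x \<noteq> l"
      "e2 \<in># (if A = B then E B - {#e1#} else E A)" "e2 = {l,y}" "y \<noteq> l"
      using get_edges[OF fS c2 pS vE lS(1) False[unfolded B_def]] unfolding A_def B_def by blast
    define E' where "E' = (\<lambda>X. if X = D then (if A = B then E B else E A + E B) - {#e1, e2#} + {#{x,y}#} else E X)"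
    note R = R_con[OF fS c2 pS vE lS(1) ee[unfolded A_def B_def]]
    have vE': "valid (S - {l}) P' E'" using R(1) unfolding E'_def P'_def D_def A_def B_def .
    have cc: "card (comps S (gr P E)) = card (comps (S - {l}) (gr P' E'))"
      using R(2) unfolding E'_def P'_def D_def A_def B_def .
    have g: "good (S - {l}) P' E'" using IH[OF lS(1) pP' vE'] .
    then have "card (comps (S - {l}) (gr P' E')) + card P' \<le> card (S - {l})"
      using crP' unfolding good_def by linarith
    then show ?thesis using cc cardP cS by linarith
  qed
qed


lemma loop_same_block:
  assumes "valid S P E" "Z \<in> P" "w \<in> S" "{w} \<in># E Z"
  shows "w \<in> Z \<and> prv S w \<in> Z"
proof -
  have "mdeg (E Z) w = ind (w \<in> Z) + ind (prv S w \<in> Z)" using assms unfolding valid_def by auto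
  moreover have "mdeg (E Z) w \<ge> 2" using mdeg_ge2[OF assms(4)] .
  ultimately show ?thesis by (auto simp: ind_def split: if_splits)
qed

lemma step_cross_b:
  assumes fS: "finite S" and c2: "card S \<ge> 2" and pS: "partition_on S P" and vE: "valid S P E"
    and IH: "\<And>l P' E'. l \<in> S \<Longrightarrow> partition_on (S - {l}) P' \<Longrightarrow> valid (S - {l}) P' E' \<Longrightarrow> good (S - {l}) P' E'"
    and cr: "crossing P" and w: "X \<in> P" "Y \<in> P" "X \<noteq> Y" and SXY: "S \<subseteq> X \<union> Y"
  shows "card (comps S (gr P E)) + card P < card S + 1"
proof -
  have PXY: "P = {X, Y}"
  proof -
    have "Z = X \<or> Z = Y" if ZP: "Z \<in> P" for Z
    proof -
      obtain z where "z \<in> Z" using part_ne[OF pS ZP] by auto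
      then have "z \<in> X \<or> z \<in> Y" using part_sub[OF pS ZP] SXY by auto
      then show ?thesis using part_disj[OF pS ZP w(1)] part_disj[OF pS ZP w(2)] \<open>z \<in> Z\<close> by auto
    qed
    then show ?thesis using w by auto
  qed
  have cP: "card P = 2" using PXY w(3) by simp
  define T where "T = {v\<in>S. blk P (prv S v) \<noteq> blk P v}"
  have cT: "4 \<le> card T" using change_points[OF fS pS cr] by (simp add: T_def)
  then obtain l where lT: "l \<in> T" by (metis card.empty ex_in_conv not_numeral_le_zero)
  then have lS: "l \<in> S" and AB: "blk P (prv S l) \<noteq> blk P l" by (auto simp: T_def)
  define A where "A = blk P (prv S l)"
  define B where "B = blk P l"
  define D where "D = redD S P l"
  define P' where "P' = redP S P l"
  have Sne: "S \<noteq> {}" using lS by auto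
  have nl: "\<not> {l} \<in># E (blk P l)"
    using R_loop(1)[OF fS c2 pS vE lS] AB by blast
  obtain e1 x e2 y where ee: "e1 \<in># E B" "e1 = {l,x}" "x \<noteq> l"
      "e2 \<in># (if A = B then E B - {#e1#} else E A)" "e2 = {l,y}" "y \<noteq> l"
    using get_edges[OF fS c2 pS vE lS nl] unfolding A_def B_def by blast
  define E' where "E' = (\<lambda>X. if X = D then (if A = B then E B else E A + E B) - {#e1, e2#} + {#{x,y}#} else E X)"
  note R = R_con[OF fS c2 pS vE lS ee[unfolded A_def B_def]]
  have vE': "valid (S - {l}) P' E'" using R(1) unfolding E'_def P'_def D_def A_def B_def .
  have cc: "card (comps S (gr P E)) = card (comps (S - {l}) (gr P' E'))"
    using R(2) unfolding E'_def P'_def D_def A_def B_def .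
  have pP': "partition_on (S - {l}) P'" using part_red[OF fS c2 pS vE lS] by (simp add: P'_def)
  have cP': "card P' = 1" using card_red[OF fS c2 pS vE lS] AB cP by (simp add: P'_def)
  have DP': "D \<in> P'" by (simp add: P'_def redP_def D_def)
  have P'D: "P' = {D}" using cP' DP' by (metis card_1_singletonE singletonD)
  have DS: "D = S - {l}" using pP' P'D unfolding partition_on_def by auto
  have cS: "card (S - {l}) + 1 = card S" using fS lS c2 by (simp add: card_Diff_singleton)
  have g: "good (S - {l}) P' E'" using IH[OF lS pP' vE'] .
  show ?thesis
  proof (rule ccontr)
    assume "\<not> ?thesis"
    then have eq: "card (comps (S - {l}) (gr P' E')) + card P' = card (S - {l}) + 1"
      using g cc cP cP' cS unfolding good_def by linarith
    then have "E' D = can (S - {l}) D" using g DP' unfolding good_def by blast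
    then have ED: "(E A + E B) - {#e1, e2#} + {#{x,y}#} = can (S - {l}) (S - {l})"
      using AB DS by (simp add: E'_def A_def B_def)
    have AP: "A \<in> P" using blk[OF pS prv_in[OF fS Sne]] by (simp add: A_def)
    have BP: "B \<in> P" using blk[OF pS lS] by (simp add: B_def)
    have "T \<subseteq> {l, x}"
    proof
      fix v assume vT: "v \<in> T"
      show "v \<in> {l, x}"
      proof (rule ccontr)
        assume "v \<notin> {l, x}"
        then have v: "v \<in> S - {l}" "v \<noteq> x" using vT by (auto simp: T_def)
        have "{v} \<in># can (S - {l}) (S - {l})" using loop_in_can fS v(1) by simp
        then have "{v} \<in># (E A + E B) - {#e1, e2#} + {#{x,y}#}" using ED by simp
        moreover have "{v} \<noteq> {x,y}" using v by auto
        ultimately have "{v} \<in># (E A + E B) - {#e1, e2#}" using v(2) by auto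
        then have "{v} \<in># E A + E B" by (meson in_diffD)
        then have "{v} \<in># E A \<or> {v} \<in># E B" by simp
        then have "blk P (prv S v) = blk P v"
        proof
          assume "{v} \<in># E A"
          then have "v \<in> A \<and> prv S v \<in> A" using loop_same_block[OF vE AP] v by auto
          then show ?thesis using blk_eq[OF pS AP] by metis
        next
          assume "{v} \<in># E B"
          then have "v \<in> B \<and> prv S v \<in> B" using loop_same_block[OF vE BP] v by auto
          then show ?thesis using blk_eq[OF pS BP] by metis
        qed
        then show False using vT by (simp add: T_def)
      qed
    qed
    then have "card T \<le> card {l, x}" by (intro card_mono) auto
    moreover have "card {l, x} \<le> 2" by (cases "l = x") auto
    ultimately have "card T \<le> 2" by linarith
    then show False using cT by simp
  qed
qed


lemma step_nc_same:
  assumes fS: "finite S" and c2: "card S \<ge> 2" and pS: "partition_on S P" and vE: "valid S P E"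
    and IH: "\<And>l P' E'. l \<in> S \<Longrightarrow> partition_on (S - {l}) P' \<Longrightarrow> valid (S - {l}) P' E' \<Longrightarrow> good (S - {l}) P' E'"
    and nc: "\<not> crossing P" and lS: "l \<in> S" and AB: "blk P (prv S l) = blk P l"
  shows "good S P E"
proof -
  define B where "B = blk P l"
  define D where "D = redD S P l"
  define P' where "P' = redP S P l"
  have Sne: "S \<noteq> {}" using lS by auto
  have BP: "B \<in> P" "l \<in> B" using blk[OF pS lS] by (auto simp: B_def)
  have pSS: "prv S l \<in> S" using prv_in[OF fS Sne] .
  have pB: "prv S l \<in> B" using blk[OF pS pSS] AB by (simp add: B_def)
  have pl: "prv S l \<noteq> l" using prv_neq[OF fS lS c2] .
  have Deq: "D = B - {l}" using AB by (simp add: D_def redD_def B_def)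
  have P'eq: "P' = insert (B - {l}) (P - {B})" using AB by (simp add: P'_def redP_def redD_def B_def)
  have pP': "partition_on (S - {l}) P'" using part_red[OF fS c2 pS vE lS] by (simp add: P'_def)
  have ncP': "\<not> crossing P'" unfolding P'eq by (rule noncross_shrink[OF nc pS BP(1)]) (use pB pl in auto)
  have cP': "card P' = card P" using card_red[OF fS c2 pS vE lS] AB by (simp add: P'_def)
  have cS: "card (S - {l}) + 1 = card S" using fS lS c2 by (simp add: card_Diff_singleton)
  have Dn: "D \<notin> P - {B}" using D_notin[OF fS c2 pS vE lS] AB by (simp add: D_def B_def)
  have BS: "B \<subseteq> S" using part_sub[OF pS BP(1)] .
  show ?thesis
  proof (cases "{l} \<in># E B")
    case True
    define E' where "E' = (\<lambda>X. if X = D then E B - {#{l}#} else E X)"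
    note R = R_loop[OF fS c2 pS vE lS True[unfolded B_def]]
    have vE': "valid (S - {l}) P' E'" using R(2) unfolding E'_def P'_def D_def B_def .
    have cc: "card (comps S (gr P E)) = card (comps (S - {l}) (gr P' E')) + 1"
      using R(3) unfolding E'_def P'_def D_def B_def .
    have g: "good (S - {l}) P' E'" using IH[OF lS pP' vE'] .
    show ?thesis unfolding good_def
    proof (intro conjI impI)
      show "card (comps S (gr P E)) + card P \<le> card S + 1" using g cc cP' cS unfolding good_def by linarith
      assume "card (comps S (gr P E)) + card P = card S + 1"
      then have "card (comps (S - {l}) (gr P' E')) + card P' = card (S - {l}) + 1" using cc cP' cS by linarith
      then have can': "\<forall>Z\<in>P'. E' Z = can (S - {l}) Z" using g unfolding good_def by blast
      show "\<not> crossing P" using nc .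
      show "\<forall>Z\<in>P. E Z = can S Z"
      proof
        fix Z assume ZP: "Z \<in> P"
        show "E Z = can S Z"
        proof (cases "Z = B")
          case True
          have "D \<in> P'" by (simp add: P'_def redP_def D_def)
          then have "E' D = can (S - {l}) D" using can' by blast
          then have "E B - {#{l}#} = can (S - {l}) (B - {l})" using Deq by (simp add: E'_def)
          then have "E B = can (S - {l}) (B - {l}) + {#{l}#}"
            by (metis \<open>{l} \<in># E B\<close> insert_DiffM2 add_mset_add_single)
          then show ?thesis using can_loop[OF fS c2 BP(2) pB BS] True by simp
        next
          case False
          then have ZP': "Z \<in> P'" "Z \<noteq> D" using ZP Dn by (auto simp: P'eq)
          then have "E' Z = can (S - {l}) Z" using can' by blast
          then have "E Z = can (S - {l}) Z" using ZP'(2) by (simp add: E'_def)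
          moreover have "can (S - {l}) Z = can S Z"
            using can_other[OF fS c2 lS part_sub[OF pS ZP]] part_disj[OF pS ZP BP(1) False] BP pB by auto
          ultimately show ?thesis by simp
        qed
      qed
    qed
  next
    case False
    obtain e1 x e2 y where ee: "e1 \<in># E B" "e1 = {l,x}" "x \<noteq> l"
      "e2 \<in># (if blk P (prv S l) = B then E B - {#e1#} else E (blk P (prv S l)))" "e2 = {l,y}" "y \<noteq> l"
      using get_edges[OF fS c2 pS vE lS False[unfolded B_def]] unfolding B_def by blast
    define E' where "E' = (\<lambda>X. if X = D then (if blk P (prv S l) = B then E B else E (blk P (prv S l)) + E B) - {#e1, e2#} + {#{x,y}#} else E X)"
    note R = R_con[OF fS c2 pS vE lS ee[unfolded B_def]]
    have vE': "valid (S - {l}) P' E'" using R(1) unfolding E'_def P'_def D_def B_def .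
    have cc: "card (comps S (gr P E)) = card (comps (S - {l}) (gr P' E'))"
      using R(2) unfolding E'_def P'_def D_def B_def .
    have g: "good (S - {l}) P' E'" using IH[OF lS pP' vE'] .
    have "card (comps S (gr P E)) + card P < card S + 1" using g cc cP' cS unfolding good_def by linarith
    then show ?thesis by (rule good_of_less)
  qed
qed

lemma single_block:
  assumes fS: "finite S" and c2: "card S \<ge> 2" and pS: "partition_on S P" and vE: "valid S P E"
    and lP: "{l} \<in> P" and e1: "e1 \<in># E {l}" "e1 = {l, x}" "x \<noteq> l"
  shows "x = nxt S l" "E {l} = {#e1#}"
proof -
  have lS: "l \<in> S" using part_sub[OF pS lP] by auto
  have degE: "mdeg (E {l}) v = ind (v = l) + ind (prv S v = l)" if "v \<in> S" for v
    using vE lP that unfolding valid_def by auto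
  have edgeE: "e \<subseteq> S \<and> (card e = 1 \<or> card e = 2)" if "e \<in># E {l}" for e
    using vE lP that unfolding valid_def by auto
  have xS: "x \<in> S" using edgeE[OF e1(1)] e1(2) by auto
  have "mdeg (E {l}) x \<ge> 1" using mdeg_ge1[OF e1(1)] e1(2) by simp
  then have "prv S x = l" using degE[OF xS] e1(3) by (auto simp: ind_def split: if_splits)
  then show xn: "x = nxt S l" using nxt_prv[OF fS xS] by simp
  have z: "mdeg (E {l} - {#e1#}) v = 0" if v: "v \<in> S" for v
  proof -
    have "prv S v = l \<longleftrightarrow> v = x" using nxt_eq_iff[OF fS lS v] xn by auto
    then show ?thesis using mdeg_minus[OF e1(1), of v] degE[OF v] e1(2,3)
      by (auto simp: ind_def mdeg_pair)
  qed
  have "E {l} - {#e1#} = {#}"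
  proof (rule ccontr)
    assume "E {l} - {#e1#} \<noteq> {#}"
    then obtain e where e: "e \<in># E {l} - {#e1#}" by (meson multiset_nonemptyE)
    then have eE: "e \<in># E {l}" by (meson in_diffD)
    then have "e \<noteq> {}" using edgeE[OF eE] by auto
    then obtain v where "v \<in> e" by auto
    moreover have "v \<in> S" using edgeE[OF eE] \<open>v \<in> e\<close> by auto
    ultimately show False using mdeg_zero[OF z e] by blast
  qed
  then show "E {l} = {#e1#}" using e1(1) by (metis add_cancel_left_left insert_DiffM2 add_mset_add_single)
qed


lemma step_nc_single:
  assumes fS: "finite S" and c2: "card S \<ge> 2" and pS: "partition_on S P" and vE: "valid S P E"
    and IH: "\<And>l P' E'. l \<in> S \<Longrightarrow> partition_on (S - {l}) P' \<Longrightarrow> valid (S - {l}) P' E' \<Longrightarrow> good (S - {l}) P' E'"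
    and nc: "\<not> crossing P" and lP: "{l} \<in> P"
  shows "good S P E"
proof -
  have lS: "l \<in> S" using part_sub[OF pS lP] by auto
  define A where "A = blk P (prv S l)"
  define q where "q = nxt A (prv S l)"
  have Sne: "S \<noteq> {}" using lS by auto
  have Bl: "blk P l = {l}" using blk_eq[OF pS lP] by simp
  have pSS: "prv S l \<in> S" using prv_in[OF fS Sne] .
  have AP: "A \<in> P" "prv S l \<in> A" using blk[OF pS pSS] by (auto simp: A_def)
  have pl: "prv S l \<noteq> l" using prv_neq[OF fS lS c2] .
  have AB: "A \<noteq> {l}" using AP pl by auto
  have lA: "l \<notin> A" using part_disj[OF pS AP(1) lP AB] by auto
  have AS: "A \<subseteq> S" using part_sub[OF pS AP(1)] .
  have Deq: "redD S P l = A" unfolding redD_def A_def[symmetric] Bl using lA by auto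
  have P'eq: "redP S P l = P - {{l}}" unfolding redP_def Deq A_def[symmetric] Bl using AP(1) AB by auto
  have pP': "partition_on (S - {l}) (P - {{l}})" using part_red[OF fS c2 pS vE lS] P'eq by simp
  have ncP': "\<not> crossing (P - {{l}})" using noncross_sub[OF nc] by blast
  have cP': "card (P - {{l}}) + 1 = card P" using card_red[OF fS c2 pS vE lS] AB P'eq Bl card_P_pos[OF fS Sne pS]
    by (simp add: A_def)
  have cS: "card (S - {l}) + 1 = card S" using fS lS c2 by (simp add: card_Diff_singleton)
  have nl: "\<not> {l} \<in># E (blk P l)"
  proof
    assume "{l} \<in># E (blk P l)"
    then have "blk P (prv S l) = blk P l" by (rule R_loop(1)[OF fS c2 pS vE lS])
    then show False using AB Bl unfolding A_def by simp
  qed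
  obtain e1 x e2 y where ee: "e1 \<in># E {l}" "e1 = {l,x}" "x \<noteq> l"
      "e2 \<in># E A" "e2 = {l,y}" "y \<noteq> l"
    using get_edges[OF fS c2 pS vE lS nl] AB unfolding A_def Bl by auto
  have ee': "e2 \<in># (if blk P (prv S l) = blk P l then E (blk P l) - {#e1#} else E (blk P (prv S l)))"
    using ee(4) AB Bl by (simp add: A_def)
  define E' where "E' = (\<lambda>X. if X = A then (E A + E {l}) - {#e1, e2#} + {#{x,y}#} else E X)"
  note R = R_con[OF fS c2 pS vE lS ee(1,2,3)[folded Bl] ee' ee(5,6)]
  have ifF: "(if A = {l} then E {l} else E A + E {l}) = E A + E {l}" using AB by simp
  have vE': "valid (S - {l}) (P - {{l}}) E'"
    using R(1) unfolding P'eq Deq Bl A_def[symmetric] ifF E'_def .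
  have cc: "card (comps S (gr P E)) = card (comps (S - {l}) (gr (P - {{l}}) E'))"
    using R(2) unfolding P'eq Deq Bl A_def[symmetric] ifF E'_def .
  have g: "good (S - {l}) (P - {{l}}) E'" using IH[OF lS pP' vE'] .
  show ?thesis unfolding good_def
  proof (intro conjI impI)
    show "card (comps S (gr P E)) + card P \<le> card S + 1" using g cc cP' cS unfolding good_def by linarith
    assume "card (comps S (gr P E)) + card P = card S + 1"
    then have "card (comps (S - {l}) (gr (P - {{l}}) E')) + card (P - {{l}}) = card (S - {l}) + 1"
      using cc cP' cS by linarith
    then have can': "\<forall>Z\<in>P - {{l}}. E' Z = can (S - {l}) Z" using g unfolding good_def by blast
    show "\<not> crossing P" using nc .
    note sb = single_block[OF fS c2 pS vE lP ee(1-3)]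
    show "\<forall>Z\<in>P. E Z = can S Z"
    proof
      fix Z assume ZP: "Z \<in> P"
      consider "Z = {l}" | "Z = A" | "Z \<noteq> {l}" "Z \<noteq> A" by blast
      then show "E Z = can S Z"
      proof cases
        case 1
        have "can S {l} = {#{nxt S l, l}#}" by (simp add: can_def nxt_single)
        then show ?thesis using sb ee(2) 1 by (simp add: insert_commute)
      next
        case 2
        have "A \<in> P - {{l}}" using AP AB by auto
        then have "E' A = can (S - {l}) A" using can' by blast
        then have eA: "(E A + E {l}) - {#e1, e2#} + {#{x,y}#} = can (S - {l}) A" by (simp add: E'_def)
        have "(E A + E {l}) - {#e1, e2#} = E A - {#e2#}" using sb(2)
          by (simp add: add_mset_commute)
        then have eA2: "E A - {#e2#} + {#{x,y}#} = can (S - {l}) A" using eA by simp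
        note cs = can_single[OF fS c2 lS AS AP(2) lA, folded q_def]
        have "{x,y} \<in># E A - {#e2#} + {#{x,y}#}" by simp
        then have "{x,y} \<in># can (S - {l}) A" by (simp only: eA2)
        then have "{x,y} = {nxt S l, q}" using cs(3) sb(1) by auto
        then have yq: "y = q" using sb(1) by (metis doubleton_eq_iff)
        have "E A = (E A - {#e2#}) + {#e2#}" using ee(4) by simp
        also have "E A - {#e2#} = can (S - {l}) A - {#{x,y}#}" using eA2 by (metis add_diff_cancel_right')
        also have "\<dots> = can S A - {#{l, q}#}" using cs(2) sb(1) yq by simp
        also have "\<dots> + {#e2#} = can S A" using cs(1) ee(5) yq by simp
        finally show ?thesis using 2 by simp
      next
        case 3
        then have "Z \<in> P - {{l}}" using ZP by auto
        then have "E' Z = can (S - {l}) Z" using can' by blast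
        then have "E Z = can (S - {l}) Z" using 3 by (simp add: E'_def)
        moreover have "can (S - {l}) Z = can S Z"
          using can_other[OF fS c2 lS part_sub[OF pS ZP]] part_disj[OF pS ZP AP(1) 3(2)]
            part_disj[OF pS ZP lP 3(1)] AP by auto
        ultimately show ?thesis by simp
      qed
    qed
  qed
qed


lemma main_good:
  "card S = n \<Longrightarrow> finite S \<Longrightarrow> S \<noteq> {} \<Longrightarrow> partition_on S P \<Longrightarrow> valid S P E \<Longrightarrow> good S P E"
proof (induction n arbitrary: S P E rule: less_induct)
  case (less n)
  note fS = less.prems(2) and Sne = less.prems(3) and pS = less.prems(4) and vE = less.prems(5)
  show ?case
  proof (cases "card S = 1")
    case True
    then show ?thesis using base_case fS pS vE by blast
  next
    case False
    have "card S \<noteq> 0" using fS Sne by simp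
    then have c2: "card S \<ge> 2" using False by linarith
    have IH: "good (S - {l}) P' E'" if "l \<in> S" "partition_on (S - {l}) P'" "valid (S - {l}) P' E'" for l P' E'
    proof -
      have "card (S - {l}) < n" using that(1) fS less.prems(1) c2 by (simp add: card_Diff_singleton)
      moreover have "S - {l} \<noteq> {}"
      proof
        assume "S - {l} = {}"
        then have "S \<subseteq> {l}" by auto
        then have "card S \<le> 1" using card_mono[of "{l}" S] by simp
        then show False using c2 by simp
      qed
      ultimately show ?thesis using less.IH[OF _ refl] fS that by blast
    qed
    show ?thesis
    proof (cases "crossing P")
      case True
      then obtain X Y i j i' j' where w: "X \<in> P" "Y \<in> P" "X \<noteq> Y" "i < j" "j < i'" "i' < j'"
        "i \<in> X" "i' \<in> X" "j \<in> Y" "j' \<in> Y" by (rule crossingE)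
      show ?thesis
      proof (cases "\<exists>l\<in>S. l \<notin> X \<and> l \<notin> Y")
        case True
        then obtain l where "l \<in> S" "l \<notin> X" "l \<notin> Y" by blast
        then show ?thesis using step_cross_a[OF fS c2 pS vE IH w] good_of_less by blast
      next
        case False
        then have "S \<subseteq> X \<union> Y" by auto
        then show ?thesis using step_cross_b[OF fS c2 pS vE IH \<open>crossing P\<close> w(1-3)] good_of_less by blast
      qed
    next
      case nc: False
      show ?thesis
      proof (cases "\<exists>l\<in>S. blk P (prv S l) = blk P l")
        case True
        then obtain l where "l \<in> S" "blk P (prv S l) = blk P l" by blast
        then show ?thesis using step_nc_same[OF fS c2 pS vE IH nc] by blast
      next
        case False
        then obtain l where "{l} \<in> P" using noncross_singleton[OF fS pS nc Sne] by blast
        then show ?thesis using step_nc_single[OF fS c2 pS vE IH nc] by blast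
      qed
    qed
  qed
qed


lemma gr_cong: "(\<And>X. X \<in> Q \<Longrightarrow> E X = F X) \<Longrightarrow> gr Q E = gr Q F"
  unfolding gr_def by (rule sum.cong) auto

lemma exist_count:
  "card S = n \<Longrightarrow> finite S \<Longrightarrow> S \<noteq> {} \<Longrightarrow> partition_on S P \<Longrightarrow> \<not> crossing P \<Longrightarrow>
   card (comps S (gr P (can S))) + card P = card S + 1"
proof (induction n arbitrary: S P rule: less_induct)
  case (less n)
  note fS = less.prems(2) and Sne = less.prems(3) and pS = less.prems(4) and nc = less.prems(5)
  show ?case
  proof (cases "card S = 1")
    case True
    obtain s where S: "S = {s}" using True card_1_singletonE by blast
    have P: "P = {{s}}"
    proof -
      have "\<forall>B\<in>P. B = {s}" using part_sub[OF pS] part_ne[OF pS] S by blast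
      moreover have "P \<noteq> {}" using pS S unfolding partition_on_def by auto
      ultimately show ?thesis by auto
    qed
    have "card (comps S (gr P (can S))) = 1" by (simp add: comps_def S quotient_def)
    then show ?thesis using P True by simp
  next
    case False
    have "card S \<noteq> 0" using fS Sne by simp
    then have c2: "card S \<ge> 2" using False by linarith
    have vE: "valid S P (can S)" using valid_can[OF fS pS] .
    have cS: "card (S - {l}) + 1 = card S" if "l \<in> S" for l using fS that c2 by (simp add: card_Diff_singleton)
    have IH: "card (comps (S - {l}) (gr P' (can (S - {l})))) + card P' = card (S - {l}) + 1"
      if "l \<in> S" "partition_on (S - {l}) P'" "\<not> crossing P'" for l P'
    proof -
      have "card (S - {l}) < n" using that(1) fS less.prems(1) c2 by (simp add: card_Diff_singleton)
      moreover have "S - {l} \<noteq> {}"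
      proof
        assume "S - {l} = {}"
        then have "S \<subseteq> {l}" by auto
        then have "card S \<le> 1" using card_mono[of "{l}" S] by simp
        then show False using c2 by simp
      qed
      ultimately show ?thesis using less.IH[OF _ refl] fS that by blast
    qed
    show ?thesis
    proof (cases "\<exists>l\<in>S. blk P (prv S l) = blk P l")
      case True
      then obtain l where lS: "l \<in> S" and AB: "blk P (prv S l) = blk P l" by blast
      define B where "B = blk P l"
      have BP: "B \<in> P" "l \<in> B" using blk[OF pS lS] by (auto simp: B_def)
      have pSS: "prv S l \<in> S" using prv_in[OF fS Sne] .
      have pB: "prv S l \<in> B" using blk[OF pS pSS] AB by (simp add: B_def)
      have pl: "prv S l \<noteq> l" using prv_neq[OF fS lS c2] .
      have BS: "B \<subseteq> S" using part_sub[OF pS BP(1)] .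
      have Deq: "redD S P l = B - {l}" using AB by (simp add: redD_def B_def)
      have P'eq: "redP S P l = insert (B - {l}) (P - {B})" using AB by (simp add: redP_def redD_def B_def)
      have pP': "partition_on (S - {l}) (redP S P l)" using part_red[OF fS c2 pS vE lS] .
      have ncP': "\<not> crossing (redP S P l)" unfolding P'eq by (rule noncross_shrink[OF nc pS BP(1)]) (use pB pl in auto)
      have cP': "card (redP S P l) = card P" using card_red[OF fS c2 pS vE lS] AB by simp
      have cl: "can S B = can (S - {l}) (B - {l}) + {#{l}#}" using can_loop[OF fS c2 BP(2) pB BS] .
      have loop: "{l} \<in># can S (blk P l)" using cl by (simp add: B_def)
      note R = R_loop[OF fS c2 pS vE lS loop]
      have Dn: "B - {l} \<notin> P - {B}" using D_notin[OF fS c2 pS vE lS] AB Deq by (simp add: B_def)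
      have geq: "gr (redP S P l) (\<lambda>X. if X = redD S P l then can S (blk P l) - {#{l}#} else can S X)
          = gr (redP S P l) (can (S - {l}))"
      proof (rule gr_cong)
        fix X assume X: "X \<in> redP S P l"
        show "(if X = redD S P l then can S (blk P l) - {#{l}#} else can S X) = can (S - {l}) X"
        proof (cases "X = redD S P l")
          case True
          then show ?thesis using cl Deq by (simp add: B_def)
        next
          case False
          then have XP: "X \<in> P" "X \<noteq> B" using X Deq by (auto simp: P'eq)
          have "can (S - {l}) X = can S X"
            using can_other[OF fS c2 lS part_sub[OF pS XP(1)]] part_disj[OF pS XP(1) BP(1) XP(2)] BP pB by auto
          then show ?thesis using False by simp
        qed
      qed
      show ?thesis using R(3) geq IH[OF lS pP' ncP'] cP' cS[OF lS] by simp
    next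
      case False
      then obtain l where lP: "{l} \<in> P" using noncross_singleton[OF fS pS nc Sne] by blast
      have lS: "l \<in> S" using part_sub[OF pS lP] by auto
      define A where "A = blk P (prv S l)"
      define q where "q = nxt A (prv S l)"
      have Bl: "blk P l = {l}" using blk_eq[OF pS lP] by simp
      have pSS: "prv S l \<in> S" using prv_in[OF fS Sne] .
      have AP: "A \<in> P" "prv S l \<in> A" using blk[OF pS pSS] by (auto simp: A_def)
      have pl: "prv S l \<noteq> l" using prv_neq[OF fS lS c2] .
      have AB: "A \<noteq> {l}" using AP pl by auto
      have lA: "l \<notin> A" using part_disj[OF pS AP(1) lP AB] by auto
      have AS: "A \<subseteq> S" using part_sub[OF pS AP(1)] .
      have fA: "finite A" using AS fS finite_subset by blast
      have Deq: "redD S P l = A" unfolding redD_def A_def[symmetric] Bl using lA by auto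
      have P'eq: "redP S P l = P - {{l}}" unfolding redP_def Deq A_def[symmetric] Bl using AP(1) AB by auto
      have pP': "partition_on (S - {l}) (P - {{l}})" using part_red[OF fS c2 pS vE lS] P'eq by simp
      have ncP': "\<not> crossing (P - {{l}})" using noncross_sub[OF nc] by blast
      have cP': "card (P - {{l}}) + 1 = card P" using card_red[OF fS c2 pS vE lS] AB P'eq Bl card_P_pos[OF fS Sne pS]
        by (simp add: A_def)
      note cs = can_single[OF fS c2 lS AS AP(2) lA, folded q_def]
      have nl: "nxt S l \<noteq> l" using nxt_neq[OF fS lS c2] .
      have qA: "q \<in> A" using nxt_in[OF fA] AP(2) by (auto simp: q_def)
      have ql: "q \<noteq> l" using qA lA by auto
      have canl: "can S {l} = {#{l, nxt S l}#}" by (simp add: can_def nxt_single insert_commute)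
      have e1: "{l, nxt S l} \<in># can S (blk P l)" using canl Bl by simp
      have e2: "{l, q} \<in># (if blk P (prv S l) = blk P l then can S (blk P l) - {#{l, nxt S l}#} else can S (blk P (prv S l)))"
        using cs(1) AB Bl by (simp add: A_def)
      note R = R_con[OF fS c2 pS vE lS e1 refl nl e2 refl ql]
      have geq: "gr (redP S P l) (\<lambda>X. if X = redD S P l then (if blk P (prv S l) = blk P l then can S (blk P l)
            else can S (blk P (prv S l)) + can S (blk P l)) - {#{l, nxt S l}, {l, q}#} + {#{nxt S l, q}#} else can S X)
          = gr (redP S P l) (can (S - {l}))"
      proof (rule gr_cong)
        fix X assume X: "X \<in> redP S P l"
        show "(if X = redD S P l then (if blk P (prv S l) = blk P l then can S (blk P l)
            else can S (blk P (prv S l)) + can S (blk P l)) - {#{l, nxt S l}, {l, q}#} + {#{nxt S l, q}#} else can S X)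
            = can (S - {l}) X"
        proof (cases "X = A")
          case True
          have "(can S A + can S {l}) - {#{l, nxt S l}, {l, q}#} = can S A - {#{l,q}#}"
            using canl by (simp add: add_mset_commute)
          then show ?thesis using True Deq AB Bl cs(2) unfolding A_def[symmetric] by simp
        next
          case False
          then have XP: "X \<in> P" "X \<noteq> {l}" "X \<noteq> A" using X by (auto simp: P'eq)
          have "can (S - {l}) X = can S X"
            using can_other[OF fS c2 lS part_sub[OF pS XP(1)]] part_disj[OF pS XP(1) AP(1) XP(3)]
              part_disj[OF pS XP(1) lP XP(2)] AP by auto
          then show ?thesis using False Deq by simp
        qed
      qed
      show ?thesis using R(2) geq IH[OF lS pP' ncP'] P'eq cP' cS[OF lS] by simp
    qed
  qed
qed


definition closedg :: "nat set multiset \<Rightarrow> nat set \<Rightarrow> bool" where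
  "closedg G Y \<longleftrightarrow> (\<forall>e\<in>#G. e \<subseteq> Y \<or> e \<inter> Y = {})"

lemma closedg_rtrancl:
  assumes "closedg G Y" "(u,v) \<in> (madj G)\<^sup>*"
  shows "u \<in> Y \<longleftrightarrow> v \<in> Y"
  using assms(2)
proof (induction rule: rtrancl_induct)
  case base then show ?case by simp
next
  case (step y z)
  then obtain e where "e \<in># G" "y \<in> e" "z \<in> e" unfolding madj_def by blast
  then show ?case using step assms(1) unfolding closedg_def by blast
qed

lemma closedg_compl:
  assumes "closedg G Y" "\<forall>e\<in>#G. e \<subseteq> S"
  shows "closedg G (S - Y)"
  using assms unfolding closedg_def by blast

lemma closedg_empty: "closedg G {}" by (simp add: closedg_def)

lemma gr_can_edge:
  assumes "finite S" "partition_on S P" "e \<in># gr P (can S)"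
  shows "\<exists>C\<in>P. \<exists>b\<in>C. e = {nxt S b, nxt C b}"
proof -
  have "finite P" using finite_part assms by blast
  then have "e \<in># (\<Sum>C\<in>P. can S C) \<Longrightarrow> \<exists>C\<in>P. \<exists>b\<in>C. e = {nxt S b, nxt C b}"
  proof (induction P rule: finite_induct)
    case empty then show ?case by simp
  next
    case (insert C F)
    then have "e \<in># can S C \<or> e \<in># (\<Sum>C\<in>F. can S C)" by simp
    then show ?case
    proof
      assume "e \<in># can S C"
      then have "\<exists>b\<in>C. e = {nxt S b, nxt C b}" unfolding can_def
        by (metis (no_types, lifting) empty_iff finite_set_mset_mset_set image_iff infinite_set_mset_mset_set
            set_image_mset set_mset_empty)
      then show ?thesis by blast
    next
      assume "e \<in># (\<Sum>C\<in>F. can S C)"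
      then show ?thesis using insert by blast
    qed
  qed
  then show ?thesis using assms(3) by (simp add: gr_def)
qed

lemma gr_can_edge_in:
  assumes "finite S" "partition_on S P" "C \<in> P" "b \<in> C"
  shows "{nxt S b, nxt C b} \<in># gr P (can S)"
proof -
  have fP: "finite P" using finite_part assms by blast
  have fC: "finite C" using finite_blk assms by blast
  have "{nxt S b, nxt C b} \<in># can S C" using fC assms(4) by (simp add: can_def)
  moreover have "gr P (can S) = can S C + (\<Sum>X\<in>P - {C}. can S X)"
    unfolding gr_def using fP assms(3) by (simp add: sum.remove)
  ultimately show ?thesis by simp
qed

lemma gr_can_sub:
  assumes "finite S" "partition_on S P" shows "\<forall>e\<in>#gr P (can S). e \<subseteq> S"
proof
  fix e assume "e \<in># gr P (can S)"
  then obtain C b where Cb: "C \<in> P" "b \<in> C" "e = {nxt S b, nxt C b}" using gr_can_edge[OF assms] by blast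
  have "C \<subseteq> S" "C \<noteq> {}" "finite C" using part_sub[OF assms(2) Cb(1)] part_ne[OF assms(2) Cb(1)]
      finite_blk[OF assms Cb(1)] by auto
  then show "e \<subseteq> S" using Cb nxt_in[OF assms(1)] nxt_in[of C] by auto
qed

lemma arc_nxt:
  assumes "finite S" "t \<in> S" "t' \<in> S" "t < t'" "b \<in> S"
  shows "(t < nxt S b \<and> nxt S b \<le> t') \<longleftrightarrow> (t \<le> b \<and> b < t')"
proof -
  have Sne: "S \<noteq> {}" using assms by auto
  note nc = nxt_char[OF assms(1) Sne, of b]
  show ?thesis
  proof (cases "\<exists>c\<in>S. b < c")
    case True
    then have n: "b < nxt S b" "\<forall>d\<in>S. b < d \<longrightarrow> nxt S b \<le> d" using nc by auto
    show ?thesis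
    proof
      assume a: "t < nxt S b \<and> nxt S b \<le> t'"
      have "\<not> b < t" using n assms(2) a by (meson leD)
      then show "t \<le> b \<and> b < t'" using a n by auto
    next
      assume a: "t \<le> b \<and> b < t'"
      then show "t < nxt S b \<and> nxt S b \<le> t'" using n assms(3) by auto
    qed
  next
    case False
    then have n: "\<forall>d\<in>S. nxt S b \<le> d" using nc by auto
    then show ?thesis using False assms by (meson leD less_le_trans not_le)
  qed
qed

lemma arc_blk:
  assumes fS: "finite S" and pS: "partition_on S P" and nc: "\<not> crossing P"
    and B: "B \<in> P" "t \<in> B" "t' \<in> B" "t < t'" and C: "C \<in> P" "b \<in> C"
  shows "(t < nxt C b \<and> nxt C b \<le> t') \<longleftrightarrow> (t \<le> b \<and> b < t')"
proof -
  have fC: "finite C" using finite_blk[OF fS pS C(1)] .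
  have Cne: "C \<noteq> {}" using C by auto
  note mc = nxt_char[OF fC Cne, of b]
  define m where "m = nxt C b"
  have mC: "m \<in> C" using mc by (simp add: m_def)
  show ?thesis
  proof (cases "C = B")
    case True
    show ?thesis
    proof (cases "\<exists>c\<in>C. b < c")
      case ex: True
      then have n: "b < m" "\<forall>d\<in>C. b < d \<longrightarrow> m \<le> d" using mc by (auto simp: m_def)
      show ?thesis unfolding m_def[symmetric]
      proof
        assume a: "t < m \<and> m \<le> t'"
        have "\<not> b < t" using n B True a by (meson leD)
        then show "t \<le> b \<and> b < t'" using a n by auto
      next
        assume a: "t \<le> b \<and> b < t'"
        then show "t < m \<and> m \<le> t'" using n B True by auto
      qed
    next
      case False
      then have n: "\<forall>d\<in>C. m \<le> d" using mc by (auto simp: m_def)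
      then show ?thesis unfolding m_def[symmetric] using False B True by (meson leD less_le_trans not_le)
    qed
  next
    case CB: False
    have dj: "B \<inter> C = {}" using part_disj[OF pS B(1) C(1)] CB by auto
    have bt: "b \<noteq> t" "b \<noteq> t'" "m \<noteq> t" "m \<noteq> t'" using dj B C mC by auto
    have cr: False if "X \<in> P" "Y \<in> P" "X \<noteq> Y" "i < j" "j < i'" "i' < j'" "i \<in> X" "i' \<in> X" "j \<in> Y" "j' \<in> Y"
      for X Y i j i' j' using crossingI[OF that] nc by simp
    show ?thesis
    proof (cases "\<exists>c\<in>C. b < c")
      case ex: True
      then have n: "b < m" "\<forall>d\<in>C. b < d \<longrightarrow> m \<le> d" using mc by (auto simp: m_def)
      show ?thesis unfolding m_def[symmetric]
      proof
        assume a: "t < m \<and> m \<le> t'"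
        show "t \<le> b \<and> b < t'"
        proof (rule ccontr)
          assume "\<not> (t \<le> b \<and> b < t')"
          then have "b < t" using n a bt by auto
          then show False using cr[OF C(1) B(1) CB, of b t m t'] a bt B C mC by auto
        qed
      next
        assume a: "t \<le> b \<and> b < t'"
        show "t < m \<and> m \<le> t'"
        proof (rule ccontr)
          assume "\<not> (t < m \<and> m \<le> t')"
          then have "t' < m" using n a by auto
          then show False using cr[OF B(1) C(1) CB[symmetric], of t b t' m] a bt B C mC by auto
        qed
      qed
    next
      case False
      then have n: "\<forall>d\<in>C. m \<le> d" using mc by (auto simp: m_def)
      have mb: "m \<le> b" using n C by auto
      show ?thesis unfolding m_def[symmetric]
      proof
        assume a: "t < m \<and> m \<le> t'"
        show "t \<le> b \<and> b < t'"
        proof (rule ccontr)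
          assume "\<not> (t \<le> b \<and> b < t')"
          then have "t' < b" using mb a bt by auto
          then show False using cr[OF B(1) C(1) CB[symmetric], of t m t' b] a bt B C mC by auto
        qed
      next
        assume a: "t \<le> b \<and> b < t'"
        show "t < m \<and> m \<le> t'"
        proof (rule ccontr)
          assume "\<not> (t < m \<and> m \<le> t')"
          then have "m < t" using mb a bt by auto
          then show False using cr[OF C(1) B(1) CB, of m t b t'] a bt B C mC by auto
        qed
      qed
    qed
  qed
qed

lemma arc_closed:
  assumes fS: "finite S" and pS: "partition_on S P" and nc: "\<not> crossing P"
    and B: "B \<in> P" "t \<in> B" "t' \<in> B" "t < t'"
  shows "closedg (gr P (can S)) {v\<in>S. t < v \<and> v \<le> t'}"
  unfolding closedg_def
proof
  fix e assume "e \<in># gr P (can S)"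
  then obtain C b where Cb: "C \<in> P" "b \<in> C" "e = {nxt S b, nxt C b}" using gr_can_edge[OF fS pS] by blast
  have CS: "C \<subseteq> S" using part_sub[OF pS Cb(1)] .
  have bS: "b \<in> S" using CS Cb by auto
  have tS: "t \<in> S" "t' \<in> S" using part_sub[OF pS B(1)] B by auto
  have n1: "nxt S b \<in> S" using nxt_in[OF fS] bS by auto
  have n2: "nxt C b \<in> S" using nxt_in[OF finite_blk[OF fS pS Cb(1)]] Cb CS by auto
  have "(t < nxt S b \<and> nxt S b \<le> t') \<longleftrightarrow> (t < nxt C b \<and> nxt C b \<le> t')"
    using arc_nxt[OF fS tS B(4) bS] arc_blk[OF fS pS nc B Cb(1,2)] by simp
  then show "e \<subseteq> {v\<in>S. t < v \<and> v \<le> t'} \<or> e \<inter> {v\<in>S. t < v \<and> v \<le> t'} = {}"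
    using Cb(3) n1 n2 by auto
qed

lemma arc_notclosed:
  assumes fS: "finite S" and pS: "partition_on S P" and B: "B \<in> P" "t \<in> B" and t': "t' \<in> S" "t' \<notin> B" "t < t'"
  shows "\<exists>b\<in>B. (t < nxt S b \<and> nxt S b \<le> t') \<and> \<not> (t < nxt B b \<and> nxt B b \<le> t')"
proof -
  define W where "W = {b\<in>B. b < t'}"
  have fB: "finite B" using finite_blk[OF fS pS B(1)] .
  have fW: "finite W" using fB by (simp add: W_def)
  have tW: "t \<in> W" using B t' by (simp add: W_def)
  define b0 where "b0 = Max W"
  have b0W: "b0 \<in> W" using Max_in[OF fW] tW by (auto simp: b0_def)
  have b0max: "\<forall>w\<in>W. w \<le> b0" using Max_ge[OF fW] by (simp add: b0_def)
  have b0: "b0 \<in> B" "b0 < t'" "t \<le> b0" using b0W b0max tW by (auto simp: W_def)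
  have BS: "B \<subseteq> S" using part_sub[OF pS B(1)] .
  have tS: "t \<in> S" using BS B by auto
  have n1: "t < nxt S b0 \<and> nxt S b0 \<le> t'" using arc_nxt[OF fS tS t'(1,3)] b0 BS by auto
  have Bne: "B \<noteq> {}" using B by auto
  note mc = nxt_char[OF fB Bne, of b0]
  have "\<not> (t < nxt B b0 \<and> nxt B b0 \<le> t')"
  proof
    assume a: "t < nxt B b0 \<and> nxt B b0 \<le> t'"
    show False
    proof (cases "\<exists>c\<in>B. b0 < c")
      case True
      then have "b0 < nxt B b0" "nxt B b0 \<in> B" using mc by auto
      moreover then have "nxt B b0 \<noteq> t'" using t' by auto
      ultimately have "nxt B b0 \<in> W" using a by (auto simp: W_def)
      then show False using b0max \<open>b0 < nxt B b0\<close> by (meson leD)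
    next
      case False
      then have "nxt B b0 \<le> t" using mc B by auto
      then show False using a by auto
    qed
  qed
  then show ?thesis using n1 b0 by blast
qed


lemma comp_class:
  assumes "C \<in> comps S G" obtains a where "a \<in> S" "C = (madj G)\<^sup>*``{a}"
  using assms unfolding comps_def quotient_def by blast

lemma comp_rel:
  assumes "C \<in> comps S G" "u \<in> C" "v \<in> C" shows "(u,v) \<in> (madj G)\<^sup>*"
proof -
  obtain a where a: "C = (madj G)\<^sup>*``{a}" using comp_class[OF assms(1)] by blast
  have s: "sym ((madj G)\<^sup>*)" using madj_sym sym_rtrancl by blast
  have "(a,u) \<in> (madj G)\<^sup>*" "(a,v) \<in> (madj G)\<^sup>*" using a assms by auto
  then show ?thesis using s by (meson rtrancl_trans symD)
qed

lemma comp_diff: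
  assumes "C1 \<in> comps S G" "C2 \<in> comps S G" "C1 \<noteq> C2" "u \<in> C1" "v \<in> C2"
  shows "(u,v) \<notin> (madj G)\<^sup>*"
proof
  assume uv: "(u,v) \<in> (madj G)\<^sup>*"
  obtain a where a: "C1 = (madj G)\<^sup>*``{a}" using comp_class[OF assms(1)] by blast
  obtain b where b: "C2 = (madj G)\<^sup>*``{b}" using comp_class[OF assms(2)] by blast
  have "(a,u) \<in> (madj G)\<^sup>*" "(b,v) \<in> (madj G)\<^sup>*" using a b assms by auto
  then have "(a,b) \<in> (madj G)\<^sup>*" using uv madj_sym sym_rtrancl
    by (metis rtrancl_trans symD)
  then show False using assms(3) a b rtrancl_sym_class_eq[OF madj_sym] by metis
qed

lemma comp_mem: "C \<in> comps S G \<Longrightarrow> u \<in> C \<Longrightarrow> (u,v) \<in> (madj G)\<^sup>* \<Longrightarrow> v \<in> C"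
  by (metis comp_class rtrancl_trans ImageE ImageI singletonD singletonI)

lemma comp_sub:
  assumes "C \<in> comps S G" "\<forall>e\<in>#G. e \<subseteq> S" shows "C \<subseteq> S"
proof
  fix v assume v: "v \<in> C"
  obtain a where a: "a \<in> S" "C = (madj G)\<^sup>*``{a}" using comp_class[OF assms(1)] by blast
  have "closedg G S" using assms(2) unfolding closedg_def by blast
  then show "v \<in> S" using closedg_rtrancl a v by blast
qed

lemma eta_nc:
  assumes fS: "finite S" and pS: "partition_on S P" and nc: "\<not> crossing P"
  shows "\<not> crossing (comps S (gr P (can S)))"
proof
  define G where "G = gr P (can S)"
  define R where "R = (madj G)\<^sup>*"
  assume "crossing (comps S (gr P (can S)))"
  then obtain C1 C2 u1 u2 u1' u2' where w: "C1 \<in> comps S G" "C2 \<in> comps S G" "C1 \<noteq> C2"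
    "u1 < u2" "u2 < u1'" "u1' < u2'" "u1 \<in> C1" "u1' \<in> C1" "u2 \<in> C2" "u2' \<in> C2"
    unfolding G_def by (rule crossingE)
  have Gsub: "\<forall>e\<in>#G. e \<subseteq> S" using gr_can_sub[OF fS pS] by (simp add: G_def)
  have C1S: "C1 \<subseteq> S" using comp_sub[OF w(1) Gsub] .
  have C2S: "C2 \<subseteq> S" using comp_sub[OF w(2) Gsub] .
  define W where "W = {c\<in>C1. u2 < c}"
  have fC1: "finite C1" using C1S fS finite_subset by blast
  have fW: "finite W" using fC1 by (simp add: W_def)
  have u1'W: "u1' \<in> W" using w by (simp add: W_def)
  define x where "x = Min W"
  have xW: "x \<in> W" using Min_in[OF fW] u1'W by (auto simp: x_def)
  have xmin: "\<forall>c\<in>C1. u2 < c \<longrightarrow> x \<le> c" using Min_le[OF fW] by (simp add: x_def W_def)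
  have x: "x \<in> C1" "u2 < x" "x \<le> u1'" using xW xmin w by (auto simp: W_def)
  have xS: "x \<in> S" using x C1S by auto
  have u2S: "u2 \<in> S" using w C2S by auto
  have Sne: "S \<noteq> {}" using xS by auto
  define p where "p = prv S x"
  note pc = prv_char[OF fS Sne, of x, folded p_def]
  have ex: "\<exists>c\<in>S. c < x" using u2S x by auto
  then have pp0: "p < x" "\<forall>d\<in>S. d < x \<longrightarrow> d \<le> p" "p \<in> S" using pc by auto
  have pp: "p < x" "u2 \<le> p" "p \<in> S" using pp0 u2S x by auto
  define B where "B = blk P p"
  have BP: "B \<in> P" "p \<in> B" using blk[OF pS pp(3)] by (auto simp: B_def)
  define q where "q = nxt B p"
  have fB: "finite B" using finite_blk[OF fS pS BP(1)] .
  have qB: "q \<in> B" using nxt_in[OF fB] BP by (auto simp: q_def)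
  have "{nxt S p, nxt B p} \<in># G" using gr_can_edge_in[OF fS pS BP] by (simp add: G_def)
  moreover have "nxt S p = x" using nxt_prv[OF fS xS] by (simp add: p_def)
  ultimately have "(x, q) \<in> madj G" by (auto simp: madj_def q_def)
  then have qC1: "q \<in> C1" using comp_mem[OF w(1) x(1)] by blast
  have qu2: "q \<noteq> u2" using comp_diff[OF w(1,2,3) qC1 w(9)] by auto
  have cl1: "(u, v) \<in> R \<Longrightarrow> closedg G Y \<Longrightarrow> u \<in> Y \<longleftrightarrow> v \<in> Y" for u v Y
    using closedg_rtrancl by (simp add: R_def)
  have rel2: "(u2, u2') \<in> R" using comp_rel[OF w(2) w(9,10)] by (simp add: R_def)
  have rel1: "(u1, x) \<in> R" using comp_rel[OF w(1) w(7) x(1)] by (simp add: R_def)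
  consider "q < p" | "p < q" | "p = q" by linarith
  then show False
  proof cases
    case 1
    have cl: "closedg G {v\<in>S. q < v \<and> v \<le> p}"
      using arc_closed[OF fS pS nc BP(1) qB BP(2) 1] by (simp add: G_def)
    have "\<not> u2 < q" using xmin qC1 1 pp by (meson leD less_trans)
    then have "u2 \<in> {v\<in>S. q < v \<and> v \<le> p}" using qu2 pp u2S by auto
    then have "u2' \<in> {v\<in>S. q < v \<and> v \<le> p}" using cl1[OF rel2 cl] by simp
    then show False using pp x w by auto
  next
    case 2
    have cl: "closedg G {v\<in>S. p < v \<and> v \<le> q}"
      using arc_closed[OF fS pS nc BP(1) BP(2) qB 2] by (simp add: G_def)
    have cl': "closedg G (S - {v\<in>S. p < v \<and> v \<le> q})" using closedg_compl[OF cl Gsub] .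
    have "u2 < q" using 2 pp by linarith
    then have "x \<le> q" using xmin qC1 by auto
    then have "x \<notin> S - {v\<in>S. p < v \<and> v \<le> q}" using pp by auto
    moreover have "u1 \<in> S - {v\<in>S. p < v \<and> v \<le> q}" using w pp C1S by auto
    ultimately show False using cl1[OF rel1 cl'] by simp
  next
    case 3
    then have "u2 < q" using qu2 pp by linarith
    then have "x \<le> q" using xmin qC1 by auto
    then show False using 3 pp by linarith
  qed
qed

lemma refines_antisym:
  assumes "partition_on A P" "partition_on A Q" "refines P Q" "refines Q P"
  shows "P = Q"
proof -
  have sub: "X \<in> Q" if h: "partition_on A P" "partition_on A Q" "refines P Q" "refines Q P" "X \<in> P"
    for P Q X
  proof -
    obtain C where C: "C \<in> Q" "X \<subseteq> C" using h(3,5) unfolding refines_def by blast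
    obtain X' where X': "X' \<in> P" "C \<subseteq> X'" using h(4) C(1) unfolding refines_def by blast
    have "X \<noteq> {}" using part_ne[OF h(1,5)] .
    then have "X \<inter> X' \<noteq> {}" using C X' by auto
    then have "X = X'" using part_disj[OF h(1) h(5) X'(1)] by blast
    then show ?thesis using C X' by auto
  qed
  show ?thesis using sub[OF assms] sub[OF assms(2,1,4,3)] by blast
qed


lemma interlace_cases:
  assumes "Z \<in> interlace N T"
  shows "(\<exists>C\<in>N. Z = (\<lambda>i. 2 * i - 1) ` C) \<or> (\<exists>B\<in>T. Z = (\<lambda>i. 2 * i) ` B)"
  using assms unfolding interlace_def by auto

lemma kreweras_eq:
  assumes k: "k \<ge> 1" and pS: "partition_on {1..k} P" and nc: "\<not> crossing P"
  shows "kreweras k (comps {1..k} (gr P (can {1..k}))) = P"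
proof -
  define S where "S = {1..k::nat}"
  define G where "G = gr P (can S)"
  define \<eta> where "\<eta> = comps S G"
  define R where "R = (madj G)\<^sup>*"
  have fS: "finite S" by (simp add: S_def)
  have pS': "partition_on S P" using pS by (simp add: S_def)
  have Gsub: "\<forall>e\<in>#G. e \<subseteq> S" using gr_can_sub[OF fS pS'] by (simp add: G_def)
  have etanc: "\<not> crossing \<eta>" using eta_nc[OF fS pS' nc] by (simp add: \<eta>_def G_def)
  have pos: "v \<in> S \<Longrightarrow> 1 \<le> v" for v by (simp add: S_def)
  have cl1: "(u, v) \<in> R \<Longrightarrow> closedg G Y \<Longrightarrow> u \<in> Y \<longleftrightarrow> v \<in> Y" for u v Y
    using closedg_rtrancl by (simp add: R_def)
  have etaS: "C \<subseteq> S" if "C \<in> \<eta>" for C using comp_sub[OF _ Gsub] that by (simp add: \<eta>_def)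
  have PS: "B \<subseteq> S" if "B \<in> P" for B using part_sub[OF pS' that] .
  have adm: "kreweras_admissible k \<eta> P"
    unfolding kreweras_admissible_def
  proof
    show "partition_on {1..k} P" using pS .
    show "\<not> crossing (interlace \<eta> P)"
    proof
      assume "crossing (interlace \<eta> P)"
      then obtain Z1 Z2 i j i' j' where w: "Z1 \<in> interlace \<eta> P" "Z2 \<in> interlace \<eta> P" "Z1 \<noteq> Z2"
        "i < j" "j < i'" "i' < j'" "i \<in> Z1" "i' \<in> Z1" "j \<in> Z2" "j' \<in> Z2" by (rule crossingE)
      consider (oo) C1 C2 where "C1 \<in> \<eta>" "Z1 = (\<lambda>i. 2 * i - 1) ` C1" "C2 \<in> \<eta>" "Z2 = (\<lambda>i. 2 * i - 1) ` C2"
        | (ee) B1 B2 where "B1 \<in> P" "Z1 = (\<lambda>i. 2 * i) ` B1" "B2 \<in> P" "Z2 = (\<lambda>i. 2 * i) ` B2"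
        | (oe) C B where "C \<in> \<eta>" "Z1 = (\<lambda>i. 2 * i - 1) ` C" "B \<in> P" "Z2 = (\<lambda>i. 2 * i) ` B"
        | (eo) B C where "B \<in> P" "Z1 = (\<lambda>i. 2 * i) ` B" "C \<in> \<eta>" "Z2 = (\<lambda>i. 2 * i - 1) ` C"
        using interlace_cases[OF w(1)] interlace_cases[OF w(2)] by (elim disjE bexE; metis)
      then show False
      proof cases
        case oo
        obtain a a' b b' where ab: "a \<in> C1" "a' \<in> C1" "b \<in> C2" "b' \<in> C2"
          "i = 2*a - 1" "i' = 2*a' - 1" "j = 2*b - 1" "j' = 2*b' - 1" using w oo by blast
        have "1 \<le> a" "1 \<le> a'" "1 \<le> b" "1 \<le> b'" using ab oo etaS pos by blast+
        then have "a < b" "b < a'" "a' < b'" using w ab by linarith+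
        moreover have "C1 \<noteq> C2" using w(3) oo by auto
        ultimately show False using crossingI[OF oo(1) oo(3)] ab etanc by blast
      next
        case ee
        obtain a a' b b' where ab: "a \<in> B1" "a' \<in> B1" "b \<in> B2" "b' \<in> B2"
          "i = 2*a" "i' = 2*a'" "j = 2*b" "j' = 2*b'" using w ee by blast
        have "a < b" "b < a'" "a' < b'" using w ab by linarith+
        moreover have "B1 \<noteq> B2" using w(3) ee by auto
        ultimately show False using crossingI[OF ee(1) ee(3)] ab nc by blast
      next
        case oe
        obtain u u' t t' where ab: "u \<in> C" "u' \<in> C" "t \<in> B" "t' \<in> B"
          "i = 2*u - 1" "i' = 2*u' - 1" "j = 2*t" "j' = 2*t'" using w oe by blast
        have "1 \<le> u" "1 \<le> u'" using ab oe etaS pos by blast+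
        then have r: "u \<le> t" "t < u'" "u' \<le> t'" "t < t'" using w ab by linarith+
        have cl: "closedg G {v\<in>S. t < v \<and> v \<le> t'}"
          using arc_closed[OF fS pS' nc oe(3) ab(3,4) r(4)] by (simp add: G_def)
        have "(u, u') \<in> R" using comp_rel[of C S G u u'] oe(1) ab by (simp add: \<eta>_def R_def)
        then have "u \<in> {v\<in>S. t < v \<and> v \<le> t'} \<longleftrightarrow> u' \<in> {v\<in>S. t < v \<and> v \<le> t'}" using cl1 cl by blast
        moreover have "u' \<in> S" using ab oe etaS by blast
        ultimately show False using r by auto
      next
        case eo
        obtain u u' t t' where ab: "u \<in> C" "u' \<in> C" "t \<in> B" "t' \<in> B"
          "j = 2*u - 1" "j' = 2*u' - 1" "i = 2*t" "i' = 2*t'" using w eo by blast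
        have "1 \<le> u" "1 \<le> u'" using ab eo etaS pos by blast+
        then have r: "t < u" "u \<le> t'" "t' < u'" "t < t'" using w ab by linarith+
        have cl: "closedg G {v\<in>S. t < v \<and> v \<le> t'}"
          using arc_closed[OF fS pS' nc eo(1) ab(3,4) r(4)] by (simp add: G_def)
        have "(u, u') \<in> R" using comp_rel[of C S G u u'] eo(3) ab by (simp add: \<eta>_def R_def)
        then have "u \<in> {v\<in>S. t < v \<and> v \<le> t'} \<longleftrightarrow> u' \<in> {v\<in>S. t < v \<and> v \<le> t'}" using cl1 cl by blast
        moreover have "u \<in> S" using ab eo etaS by blast
        ultimately show False using r by auto
      qed
    qed
  qed
  have maxi: "refines T P" if T: "kreweras_admissible k \<eta> T" for T
    unfolding refines_def
  proof
    fix Z assume ZT: "Z \<in> T"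
    have pT: "partition_on S T" using T by (simp add: kreweras_admissible_def S_def)
    have ncT: "\<not> crossing (interlace \<eta> T)" using T by (simp add: kreweras_admissible_def)
    obtain z where z: "z \<in> Z" using part_ne[OF pT ZT] by auto
    have ZS: "Z \<subseteq> S" using part_sub[OF pT ZT] .
    define C where "C = blk P z"
    have CP: "C \<in> P" "z \<in> C" using blk[OF pS'] z ZS by (auto simp: C_def)
    have "Z \<subseteq> C"
    proof
      fix w assume wZ: "w \<in> Z"
      show "w \<in> C"
      proof (rule ccontr)
        assume wC: "w \<notin> C"
        define t where "t = min z w"
        define t'' where "t'' = max z w"
        have zw: "z \<noteq> w" using wC CP by auto
        have tt: "t < t''" "t \<in> Z" "t'' \<in> Z" using zw z wZ by (auto simp: t_def t''_def min_def max_def)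
        have tS: "t \<in> S" "t'' \<in> S" using tt ZS by auto
        define B where "B = blk P t"
        have BP: "B \<in> P" "t \<in> B" using blk[OF pS' tS(1)] by (auto simp: B_def)
        have wS: "w \<in> S" using wZ ZS by auto
        have bzw: "blk P z \<noteq> blk P w"
        proof
          assume "blk P z = blk P w"
          then have "w \<in> C" using blk(2)[OF pS' wS] by (simp add: C_def)
          then show False using wC by simp
        qed
        have "blk P t \<noteq> blk P t''"
        proof (cases "z < w")
          case True then show ?thesis using bzw by (simp add: t_def t''_def min_def max_def)
        next
          case False then show ?thesis using bzw zw by (simp add: t_def t''_def min_def max_def)
        qed
        then have "t'' \<notin> B" using blk_eq[OF pS' BP(1)] by (metis B_def)
        then obtain b where b: "b \<in> B" "t < nxt S b \<and> nxt S b \<le> t''" "\<not> (t < nxt B b \<and> nxt B b \<le> t'')"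
          using arc_notclosed[OF fS pS' BP tS(2) _ tt(1)] by blast
        define u where "u = nxt S b"
        define u' where "u' = nxt B b"
        have fB: "finite B" using finite_blk[OF fS pS' BP(1)] .
        have u'B: "u' \<in> B" using nxt_in[OF fB] b(1) by (auto simp: u'_def)
        have uS: "u \<in> S" "u' \<in> S" using nxt_in[OF fS] b(1) BP PS u'B by (auto simp: u_def)
        have "{u, u'} \<in># G" using gr_can_edge_in[OF fS pS' BP(1) b(1)] by (simp add: G_def u_def u'_def)
        then have "(u, u') \<in> madj G" by (auto simp: madj_def)
        define Cc where "Cc = R``{u}"
        have Cc: "Cc \<in> \<eta>" using uS by (auto simp: \<eta>_def comps_def quotient_def Cc_def R_def)
        have uCc: "u \<in> Cc" "u' \<in> Cc" using \<open>(u, u') \<in> madj G\<close> by (auto simp: Cc_def R_def)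
        have Zi: "(\<lambda>i. 2 * i) ` Z \<in> interlace \<eta> T" using ZT by (simp add: interlace_def)
        have Ci: "(\<lambda>i. 2 * i - 1) ` Cc \<in> interlace \<eta> T" using Cc by (simp add: interlace_def)
        have ne: "(\<lambda>i. 2 * i) ` Z \<noteq> (\<lambda>i. 2 * i - 1) ` Cc"
        proof
          assume "(\<lambda>i. 2 * i) ` Z = (\<lambda>i. 2 * i - 1) ` Cc"
          then have "2 * t \<in> (\<lambda>i. 2 * i - 1) ` Cc" using tt by auto
          then obtain c where "c \<in> Cc" "2 * t = 2 * c - 1" by auto
          moreover have "1 \<le> c" using \<open>c \<in> Cc\<close> Cc etaS pos by blast
          ultimately show False by presburger
        qed
        have ub: "t < u" "u \<le> t''" using b(2) by (auto simp: u_def)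
        have u'1: "1 \<le> u'" "1 \<le> u" using uS pos by auto
        show False
        proof (cases "t'' < u'")
          case True
          have "crossing (interlace \<eta> T)"
            by (rule crossingI[OF Zi Ci ne, of "2*t" "2*u - 1" "2*t''" "2*u' - 1"])
               (use ub True u'1 tt uCc in auto)
          then show False using ncT by simp
        next
          case False
          then have "u' \<le> t" using b(3) by (auto simp: u'_def)
          have "crossing (interlace \<eta> T)"
            by (rule crossingI[OF Ci Zi ne[symmetric], of "2*u' - 1" "2*t" "2*u - 1" "2*t''"])
               (use ub \<open>u' \<le> t\<close> u'1 tt uCc in auto)
          then show False using ncT by simp
        qed
      qed
    qed
    then show "\<exists>C\<in>P. Z \<subseteq> C" using CP by blast
  qed
  have "kreweras k \<eta> = P"
    unfolding kreweras_def
  proof (rule the_equality)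
    show "kreweras_admissible k \<eta> P \<and> (\<forall>T. kreweras_admissible k \<eta> T \<longrightarrow> refines T P)"
      using adm maxi by blast
    fix Q assume Q: "kreweras_admissible k \<eta> Q \<and> (\<forall>T. kreweras_admissible k \<eta> T \<longrightarrow> refines T Q)"
    have "refines P Q" using Q adm by blast
    moreover have "refines Q P" using maxi Q by blast
    moreover have "partition_on {1..k} Q" using Q by (simp add: kreweras_admissible_def)
    ultimately show "Q = P" using refines_antisym[OF pS] by blast
  qed
  then show ?thesis by (simp add: \<eta>_def G_def S_def)
qed


lemma gr_mem_inv:
  assumes "finite P" "e \<in># gr P E" shows "\<exists>B\<in>P. e \<in># E B"
proof -
  have "e \<in># (\<Sum>B\<in>P. E B) \<Longrightarrow> \<exists>B\<in>P. e \<in># E B" using assms(1)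
    by (induction P rule: finite_induct) auto
  then show ?thesis using assms(2) by (simp add: gr_def)
qed

lemma gr_mem:
  assumes "finite P" "B \<in> P" "e \<in># E B" shows "e \<in># gr P E"
proof -
  have "gr P E = E B + (\<Sum>X\<in>P - {B}. E X)" unfolding gr_def using assms by (simp add: sum.remove)
  then show ?thesis using assms(3) by simp
qed

lemma sum_ind_blocks:
  fixes S :: "nat set"
  assumes "finite S" "partition_on S P" "v \<in> S"
  shows "(\<Sum>B\<in>P. ind (v \<in> B)) = 1"
proof -
  have fP: "finite P" using finite_part assms by blast
  have "(\<Sum>B\<in>P. ind (v \<in> B)) = (\<Sum>B\<in>P. ind (B = blk P v))"
  proof (rule sum.cong[OF refl])
    fix B assume B: "B \<in> P"
    have "v \<in> B \<longleftrightarrow> B = blk P v" using blk_eq[OF assms(2) B] blk[OF assms(2,3)] by auto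
    then show "ind (v \<in> B) = ind (B = blk P v)" by simp
  qed
  also have "\<dots> = 1" using sum_ind_eq[OF fP] blk[OF assms(2,3)] by (simp add: ind_def)
  finally show ?thesis .
qed

lemma card_part_le:
  fixes S :: "nat set"
  assumes "finite S" "partition_on S P" shows "card P \<le> card S"
proof -
  define f where "f B = (SOME x. x \<in> B)" for B :: "nat set"
  have fB: "f B \<in> B" if "B \<in> P" for B using part_ne[OF assms(2) that] by (simp add: f_def some_in_eq)
  have "inj_on f P"
  proof (rule inj_onI)
    fix X Y assume XY: "X \<in> P" "Y \<in> P" "f X = f Y"
    show "X = Y"
    proof (rule ccontr)
      assume "X \<noteq> Y"
      then have "X \<inter> Y = {}" using part_disj[OF assms(2) XY(1,2)] by simp
      then show False using fB[OF XY(1)] fB[OF XY(2)] XY(3) by auto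
    qed
  qed
  moreover have "f ` P \<subseteq> S" using fB part_sub[OF assms(2)] by blast
  ultimately have "card (f ` P) = card P" "card (f ` P) \<le> card S"
    using card_image card_mono assms(1) by blast+
  then show ?thesis by simp
qed

lemma mult_pi_eq:
  assumes "partition_on {1..k} P" "B \<in> P" "l \<in> {1..k}" "l \<in> B \<or> cprev k l \<in> B"
  shows "mult_pi k P l = ind (l \<in> B) + ind (cprev k l \<in> B)"
proof -
  have "(\<exists>B'\<in>P. l \<in> B' \<and> cprev k l \<in> B') \<longleftrightarrow> (l \<in> B \<and> cprev k l \<in> B)"
    using assms part_disj[OF assms(1) _ assms(2)] by blast
  then show ?thesis using assms(4) unfolding mult_pi_def by (auto simp: ind_def)
qed

lemma closed_block_iff:
  "l \<in> {1..k} \<Longrightarrow> l \<in> closed_block k B \<longleftrightarrow> l \<in> B \<or> cprev k l \<in> B"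
  by (auto simp: closed_block_def)

lemma cons_to_valid:
  assumes pS: "partition_on {1..k} P" and c: "consistent k P G"
  shows "\<exists>E. valid {1..k} P E \<and> G = gr P E"
proof -
  obtain E where E: "G = (\<Sum>B\<in>P. E B)"
    "\<forall>B\<in>P. (\<forall>e\<in>#E B. e \<subseteq> closed_block k B) \<and> (\<forall>l\<in>closed_block k B. mdeg (E B) l = mult_pi k P l)"
    using c unfolding consistent_def by blast
  have mg: "is_mgraph k G" using c unfolding consistent_def by blast
  have fP: "finite P" using finite_part[OF _ pS] by simp
  have "valid {1..k} P E"
    unfolding valid_def
  proof (rule conjI; intro ballI)
    fix B e assume B: "B \<in> P" and e: "e \<in># E B"
    have "e \<in># G" using gr_mem[OF fP B, of e E] e E(1) by (simp add: gr_def)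
    then show "e \<subseteq> {1..k} \<and> (card e = 1 \<or> card e = 2)" using mg unfolding is_mgraph_def by blast
  next
    fix B v assume B: "B \<in> P" and v: "v \<in> {1..k}"
    have pv: "prv {1..k} v = cprev k v" using prv_interval[OF v] .
    show "mdeg (E B) v = ind (v \<in> B) + ind (prv {1..k} v \<in> B)"
    proof (cases "v \<in> B \<or> cprev k v \<in> B")
      case True
      then have "v \<in> closed_block k B" using closed_block_iff[OF v] by blast
      then show ?thesis using E(2) B mult_pi_eq[OF pS B v True] pv by simp
    next
      case False
      then have "v \<notin> closed_block k B" using closed_block_iff[OF v] by blast
      then have "\<forall>e\<in>#E B. v \<notin> e" using E(2) B by blast
      then have "mdeg (E B) v = 0" unfolding mdeg_def by (induction "E B") auto
      then show ?thesis using False pv by (simp add: ind_def)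
    qed
  qed
  then show ?thesis using E(1) by (auto simp: gr_def)
qed

lemma mdeg_no_edge: "\<forall>e\<in>#M. v \<notin> e \<Longrightarrow> mdeg M v = 0"
  by (induction M) (auto simp: mdeg_add_mset)

lemma valid_to_cons:
  assumes pS: "partition_on {1..k} P" and vE: "valid {1..k} P E"
  shows "consistent k P (gr P E)"
proof -
  have fP: "finite P" using finite_part[OF _ pS] by simp
  have edges: "e \<subseteq> {1..k} \<and> (card e = 1 \<or> card e = 2)" if "e \<in># gr P E" for e
    using gr_mem_inv[OF fP that] vE unfolding valid_def by blast
  have mg: "is_mgraph k (gr P E)" unfolding is_mgraph_def using edges by blast
  have degE: "mdeg (E B) v = ind (v \<in> B) + ind (cprev k v \<in> B)" if "B \<in> P" "v \<in> {1..k}" for B v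
    using vE that prv_interval unfolding valid_def by auto
  have deg2: "mdeg (gr P E) v = 2" if v: "v \<in> {1..k}" for v
  proof -
    have cv: "cprev k v \<in> {1..k}" using v by (auto simp: cprev_def)
    have "mdeg (gr P E) v = (\<Sum>B\<in>P. ind (v \<in> B) + ind (cprev k v \<in> B))"
      unfolding gr_def mdeg_sum[OF fP] using degE v by simp
    also have "\<dots> = 2" using sum_ind_blocks[OF _ pS v] sum_ind_blocks[OF _ pS cv] by (simp add: sum.distrib)
    finally show ?thesis .
  qed
  have "(\<Sum>v\<in>{1..k}. mdeg (gr P E) v) = 2 * size (gr P E)"
    using deg_sum[of "gr P E" "{1..k}"] edges by blast
  moreover have "(\<Sum>v\<in>{1..k}. mdeg (gr P E) v) = 2 * k" using deg2 by simp
  ultimately have sz: "size (gr P E) = k" by simp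
  have cond: "\<forall>B\<in>P. (\<forall>e\<in>#E B. e \<subseteq> closed_block k B) \<and> (\<forall>l\<in>closed_block k B. mdeg (E B) l = mult_pi k P l)"
  proof
    fix B assume B: "B \<in> P"
    have c1: "\<forall>e\<in>#E B. e \<subseteq> closed_block k B"
    proof (intro ballI subsetI)
      fix e u assume e: "e \<in># E B" and u: "u \<in> e"
      have uS: "u \<in> {1..k}" using vE B e u unfolding valid_def by blast
      have "mdeg (E B) u \<ge> 1" using mdeg_ge1[OF e u] .
      then have "u \<in> B \<or> cprev k u \<in> B" using degE[OF B uS] by (auto simp: ind_def split: if_splits)
      then show "u \<in> closed_block k B" using closed_block_iff[OF uS] by blast
    qed
    have c2: "\<forall>l\<in>closed_block k B. mdeg (E B) l = mult_pi k P l"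
    proof
      fix l assume l: "l \<in> closed_block k B"
      have lS: "l \<in> {1..k}" using l part_sub[OF pS B] by (auto simp: closed_block_def)
      then show "mdeg (E B) l = mult_pi k P l"
        using mult_pi_eq[OF pS B lS] closed_block_iff[OF lS] l degE[OF B lS] by simp
    qed
    show "(\<forall>e\<in>#E B. e \<subseteq> closed_block k B) \<and> (\<forall>l\<in>closed_block k B. mdeg (E B) l = mult_pi k P l)"
      using c1 c2 by blast
  qed
  show ?thesis unfolding consistent_def using mg sz cond by (auto simp: gr_def)
qed


theorem mainTheorem3:
  fixes k :: nat and P :: "nat set set"
  assumes "k \<ge> 1" and "partition_on {1..k} P"
  shows "(crossing P \<longrightarrow> Istar k P = {}) \<and>
         (\<not> crossing P \<longrightarrow>
            (\<exists>G. Istar k P = {G} \<and> P = kreweras k (components k G)))"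
proof -
  define S where "S = {1..k}"
  have fS: "finite S" by (simp add: S_def)
  have Sne: "S \<noteq> {}" using assms(1) by (auto simp: S_def)
  have pS: "partition_on S P" using assms(2) by (simp add: S_def)
  have cS: "card S = k" by (simp add: S_def)
  have cP: "card P \<le> k" using card_part_le[OF fS pS] cS by simp
  have compeq: "components k G = comps S G" for G by (simp add: components_def comps_def S_def)
  have Ist: "G \<in> Istar k P \<longleftrightarrow> consistent k P G \<and> card (comps S G) + card P = card S + 1" for G
    using cP cS compeq by (auto simp: Istar_def)
  have good_of: "\<exists>E. G = gr P E \<and> good S P E" if cG: "consistent k P G" for G
  proof -
    obtain E where E: "valid {1..k} P E" "G = gr P E" using cons_to_valid[OF assms(2) cG] by blast
    have "good S P E" using main_good[OF refl fS Sne pS] E(1) by (simp add: S_def)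
    then show ?thesis using E(2) by blast
  qed
  show ?thesis
  proof (intro conjI impI)
    assume cr: "crossing P"
    show "Istar k P = {}"
    proof (rule ccontr)
      assume "Istar k P \<noteq> {}"
      then obtain G where G: "G \<in> Istar k P" by blast
      then have c: "consistent k P G" "card (comps S G) + card P = card S + 1" using Ist by auto
      obtain E where "G = gr P E" "good S P E" using good_of[OF c(1)] by blast
      then show False using c(2) cr unfolding good_def by blast
    qed
  next
    assume nc: "\<not> crossing P"
    define G0 where "G0 = gr P (can S)"
    have v0: "valid S P (can S)" using valid_can[OF fS pS] .
    have c0: "consistent k P G0" using valid_to_cons[OF assms(2)] v0 by (simp add: G0_def S_def)
    have n0: "card (comps S G0) + card P = card S + 1"
      using exist_count[OF refl fS Sne pS nc] by (simp add: G0_def)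
    have "Istar k P = {G0}"
    proof
      show "{G0} \<subseteq> Istar k P" using c0 n0 Ist by auto
      show "Istar k P \<subseteq> {G0}"
      proof
        fix G assume "G \<in> Istar k P"
        then have c: "consistent k P G" "card (comps S G) + card P = card S + 1" using Ist by auto
        obtain E where E: "G = gr P E" "good S P E" using good_of[OF c(1)] by blast
        then have "\<forall>B\<in>P. E B = can S B" using c(2) E unfolding good_def by blast
        then have "G = G0" using E(1) gr_cong[of P E "can S"] by (simp add: G0_def)
        then show "G \<in> {G0}" by simp
      qed
    qed
    moreover have "P = kreweras k (components k G0)"
      using kreweras_eq[OF assms(1,2) nc] compeq by (simp add: G0_def S_def)
    ultimately show "\<exists>G. Istar k P = {G} \<and> P = kreweras k (components k G)" by blast
  qed
qed


end
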